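(* Let $0<q<1$ and $\Sigma\sim\mathrm{Mallows}(\mathbb{Z},q)$. As $k\to\infty$: (1) $\mathbb{P}(C_1(\rho\circ\Sigma)\ge2k)=\Omega\bigl(q^{\binom{2k}{2}}(1-q)^{2k}\bigr)$; (2) $\mathbb{P}(C_1(r\circ\Sigma)\ge2k)=o\bigl(q^{\binom{2k}{2}}(1-q)^{2k}\bigr)$; (3) $\mathbb{P}(C_1(r\circ\Sigma)\ge2k+1)=\Omega\bigl(q^{\binom{2k+1}{2}}(1-q)^{2k+1}\bigr)$; (4) $\mathbb{P}(C_1(\rho\circ\Sigma)\ge2k+1)=o\bigl(q^{\binom{2k+1}{2}}(1-q)^{2k+1}\bigr)$.
   Context: For a finite set $A\subseteq\mathbb{Z}$ and a bijection $\pi:A\to A$, $\mathrm{inv}(\pi)$ is the number of pairs $i<j$ in $A$ with $\pi(i)>\pi(j)$, and $\Pi_A\sim\mathrm{Mallows}(A,q)$ means $\mathbb{P}(\Pi_A=\pi)\propto q^{\mathrm{inv}(\pi)}$ over bijections $\pi$ of $A$. For a bijection $\sigma$ of a set $B\subseteq\mathbb{Z}$ and finite $A\subseteq B$, the pattern $\sigma_A:A\to A$ is defined by $\sigma_A(a)=a_{(i)}$ when $\sigma(a)$ is the $i$-th smallest element of $\sigma[A]$, where $a_{(i)}$ is the $i$-th smallest element of $A$. For $0<q<1$, $\mathrm{Mallows}(\mathbb{Z},q)$ is Gnedin and Olshanski's bi-infinite Mallows measure: the law of a random bijection $\Sigma$ of $\mathbb{Z}$ such that $\Sigma_I\sim\mathrm{Mallows}(I,q)$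 for every finite interval of integers $I$, and, with $I_n=\{-n,\dots,n\}$, almost surely for every $i\in\mathbb{Z}$ one has $\Sigma_{I_n}(i)=\Sigma(i)$ for all sufficiently large $n$. $C_1(\pi)$ is the number of fixed points of a permutation $\pi$ of $\mathbb{Z}$. The maps $r,\rho:\mathbb{Z}\to\mathbb{Z}$ are $r(i)=-i$, $\rho(i)=1-i$. $f=\Omega(g)$ means $f\ge cg$ for some constant $c>0$ and all large $k$; $f=o(g)$ means $f/g\to0$. *)

theory Defs
  imports "HOL-Probability.Probability" "HOL-Library.Landau_Symbols" "HOL-Library.Extended_Nat"
begin

definition kth_smallest :: "int set \<Rightarrow> nat \<Rightarrow> int" where
  "kth_smallest A i = (THE x. x \<in> A \<and> card {y \<in> A. y < x} = i)"

definition pattern :: "(int \<Rightarrow> int) \<Rightarrow> int set \<Rightarrow> int \<Rightarrow> int" where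
  "pattern \<sigma> A a =
     (if a \<in> A then kth_smallest A (card {b \<in> \<sigma> ` A. b < \<sigma> a}) else a)"

definition perms_of :: "int set \<Rightarrow> (int \<Rightarrow> int) set" where
  "perms_of A = {\<pi>. bij_betw \<pi> A A \<and> (\<forall>x. x \<notin> A \<longrightarrow> \<pi> x = x)}"

definition inversions :: "(int \<Rightarrow> int) \<Rightarrow> int set \<Rightarrow> nat" where
  "inversions \<pi> A = card {(i, j). i \<in> A \<and> j \<in> A \<and> i < j \<and> \<pi> j < \<pi> i}"

definition mallows_prob :: "int set \<Rightarrow> real \<Rightarrow> (int \<Rightarrow> int) \<Rightarrow> real" where
  "mallows_prob A q \<pi> = q ^ inversions \<pi> A / (\<Sum>\<tau>\<in>perms_of A. q ^ inversions \<tau> A)"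

text \<open>Sigma (a random function Z -> Z on the probability space M) has law Mallows(Z,q)
  (Gnedin--Olshanski bi-infinite Mallows measure).\<close>
definition mallows_Z :: "'a measure \<Rightarrow> real \<Rightarrow> ('a \<Rightarrow> int \<Rightarrow> int) \<Rightarrow> bool" where
  "mallows_Z M q \<Sigma> \<longleftrightarrow>
     (\<forall>i. (\<lambda>\<omega>. \<Sigma> \<omega> i) \<in> measurable M (count_space UNIV)) \<and>
     (AE \<omega> in M. bij (\<Sigma> \<omega>)) \<and>
     (\<forall>a b \<pi>. \<pi> \<in> perms_of {a..b} \<longrightarrow>
        measure M {\<omega> \<in> space M. pattern (\<Sigma> \<omega>) {a..b} = \<pi>} = mallows_prob {a..b} q \<pi>) \<and>
     (AE \<omega> in M. \<forall>i. \<exists>N. \<forall>n\<ge>N. pattern (\<Sigma> \<omega>) {-int n..int n} i = \<Sigma> \<omega> i)"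

definition C1 :: "(int \<Rightarrow> int) \<Rightarrow> enat" where
  "C1 \<pi> = (if finite {i. \<pi> i = i} then enat (card {i. \<pi> i = i}) else \<infinity>)"

definition r_map :: "int \<Rightarrow> int" where "r_map i = - i"
definition rho_map :: "int \<Rightarrow> int" where "rho_map i = 1 - i"

end

theory Submission
  imports Defs
begin


definition perms2 :: "int set \<Rightarrow> int set \<Rightarrow> (int \<Rightarrow> int) set" where
  "perms2 A B = {\<pi>. bij_betw \<pi> A B \<and> (\<forall>x. x \<notin> A \<longrightarrow> \<pi> x = x)}"

fun Zq :: "real \<Rightarrow> nat \<Rightarrow> real" where
  "Zq q 0 = 1"
| "Zq q (Suc n) = Zq q n * (\<Sum>j<Suc n. q^j)"

lemma perms_of_eq: "perms_of A = perms2 A A"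
  by (simp add: perms_of_def perms2_def)

lemma finite_perms2:
  assumes "finite A" "finite B"
  shows "finite (perms2 A B)"
proof -
  have "inj_on (\<lambda>\<pi>. restrict \<pi> A) (perms2 A B)"
  proof (rule inj_onI)
    fix f g assume f: "f \<in> perms2 A B" and g: "g \<in> perms2 A B" and e: "restrict f A = restrict g A"
    show "f = g"
    proof
      fix x show "f x = g x"
        using f g e unfolding perms2_def restrict_def by (cases "x \<in> A") (auto dest: fun_cong[where x=x])
    qed
  qed
  moreover have "(\<lambda>\<pi>. restrict \<pi> A) ` perms2 A B \<subseteq> A \<rightarrow>\<^sub>E B"
    unfolding perms2_def bij_betw_def by auto
  moreover have "finite (A \<rightarrow>\<^sub>E B)" using assms by (simp add: finite_PiE)
  ultimately show ?thesis using finite_imageD finite_subset by metis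
qed

lemma perms2_empty: "perms2 {} {} = {id}"
  unfolding perms2_def by (auto simp: fun_eq_iff)

lemma sum_card_greater:
  fixes B :: "int set" and q :: real
  assumes "finite B"
  shows "(\<Sum>b\<in>B. q ^ card {y\<in>B. b < y}) = (\<Sum>j<card B. q^j)"
proof -
  let ?g = "\<lambda>b. card {y\<in>B. b < y}"
  have inj: "inj_on ?g B"
  proof (rule inj_onI)
    fix b c assume b: "b \<in> B" and c: "c \<in> B" and e: "?g b = ?g c"
    show "b = c"
    proof (rule ccontr)
      assume "b \<noteq> c"
      then consider "b < c" | "c < b" by linarith
      then show False
      proof cases
        case 1
        have "{y\<in>B. c < y} \<subset> {y\<in>B. b < y}" using 1 c by auto
        then have "?g c < ?g b" using assms by (intro psubset_card_mono) auto
        then show False using e by simp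
      next
        case 2
        have "{y\<in>B. b < y} \<subset> {y\<in>B. c < y}" using 2 b by auto
        then have "?g b < ?g c" using assms by (intro psubset_card_mono) auto
        then show False using e by simp
      qed
    qed
  qed
  have sub: "?g ` B \<subseteq> {..<card B}"
  proof
    fix j assume "j \<in> ?g ` B"
    then obtain b where b: "b \<in> B" "j = ?g b" by auto
    have "{y\<in>B. b < y} \<subset> B" using b by auto
    then show "j \<in> {..<card B}" using b assms by (simp add: psubset_card_mono)
  qed
  have "card (?g ` B) = card B" using inj by (simp add: card_image)
  then have img: "?g ` B = {..<card B}"
    using sub by (intro card_subset_eq) auto
  show ?thesis
    using sum.reindex[OF inj, of "\<lambda>j. q^j"] img by simp
qed


lemma upd_mem:
  assumes p: "\<pi> \<in> perms2 (A - {a}) (B - {b})" and a: "a \<in> A" and b: "b \<in> B"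
  shows "\<pi>(a:=b) \<in> perms2 A B"
proof -
  have bij: "bij_betw \<pi> (A - {a}) (B - {b})" and id: "\<forall>x. x \<notin> A - {a} \<longrightarrow> \<pi> x = x"
    using p unfolding perms2_def by auto
  have "inj_on (\<pi>(a:=b)) A"
  proof (rule inj_onI)
    fix x y assume x: "x \<in> A" and y: "y \<in> A" and e: "(\<pi>(a:=b)) x = (\<pi>(a:=b)) y"
    have im: "\<pi> ` (A - {a}) = B - {b}" and inj: "inj_on \<pi> (A - {a})" using bij unfolding bij_betw_def by auto
    show "x = y"
    proof (cases "x = a"; cases "y = a")
      assume "x = a" "y \<noteq> a"
      then have "\<pi> y \<in> B - {b}" using im y by blast
      then show ?thesis using e \<open>x = a\<close> \<open>y \<noteq> a\<close> by simp
    next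
      assume "x \<noteq> a" "y = a"
      then have "\<pi> x \<in> B - {b}" using im x by blast
      then show ?thesis using e \<open>y = a\<close> \<open>x \<noteq> a\<close> by simp
    next
      assume "x \<noteq> a" "y \<noteq> a"
      then show ?thesis using inj e x y by (simp add: inj_on_def)
    qed simp
  qed
  moreover have "(\<pi>(a:=b)) ` A = B"
  proof -
    have "A = insert a (A - {a})" using a by auto
    have "(\<pi>(a:=b)) ` A = insert b (\<pi> ` (A - {a}))" by (simp only: fun_upd_image a if_True)
    also have "\<dots> = B" using bij b unfolding bij_betw_def by auto
    finally show ?thesis .
  qed
  ultimately show ?thesis using id a unfolding perms2_def bij_betw_def by auto
qed

lemma restr_mem:
  assumes p: "\<pi> \<in> perms2 A B" and a: "a \<in> A"
  shows "\<pi>(a:=a) \<in> perms2 (A - {a}) (B - {\<pi> a})"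
proof -
  have bij: "bij_betw \<pi> A B" and id: "\<forall>x. x \<notin> A \<longrightarrow> \<pi> x = x"
    using p unfolding perms2_def by auto
  have "bij_betw \<pi> (A - {a}) (B - {\<pi> a})"
    using bij a unfolding bij_betw_def by (auto simp: inj_on_image_set_diff inj_on_def)
  then have "bij_betw (\<pi>(a:=a)) (A - {a}) (B - {\<pi> a})"
    by (rule bij_betw_cong[THEN iffD1, rotated]) auto
  then show ?thesis using id unfolding perms2_def by auto
qed


lemma inversions_upd:
  assumes fin: "finite A" and a: "a \<in> A" and amax: "\<forall>x\<in>A. x \<le> a"
    and p: "\<pi> \<in> perms2 (A - {a}) (B - {b})" and b: "b \<in> B"
  shows "inversions (\<pi>(a:=b)) A = inversions \<pi> (A - {a}) + card {y\<in>B. b < y}"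
proof -
  have bij: "bij_betw \<pi> (A - {a}) (B - {b})" using p unfolding perms2_def by auto
  let ?I1 = "{(i, j). i \<in> A - {a} \<and> j \<in> A - {a} \<and> i < j \<and> \<pi> j < \<pi> i}"
  let ?S = "{i\<in>A-{a}. b < \<pi> i}"
  have eq: "{(i, j). i \<in> A \<and> j \<in> A \<and> i < j \<and> (\<pi>(a:=b)) j < (\<pi>(a:=b)) i} = ?I1 \<union> (\<lambda>i. (i,a)) ` ?S"
  proof (rule set_eqI, clarify)
    fix i j
    show "((i, j) \<in> {(i, j). i \<in> A \<and> j \<in> A \<and> i < j \<and> (\<pi>(a:=b)) j < (\<pi>(a:=b)) i}) =
          ((i, j) \<in> ?I1 \<union> (\<lambda>i. (i,a)) ` ?S)"
    proof (cases "j = a")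
      case True
      then show ?thesis using amax a by (auto simp: image_iff)
    next
      case False
      then show ?thesis using amax by (auto simp: image_iff)
    qed
  qed
  have fin1: "finite ?I1" by (rule finite_subset[of _ "A \<times> A"]) (use fin in auto)
  have fin2: "finite ?S" using fin by auto
  have disj: "?I1 \<inter> (\<lambda>i. (i,a)) ` ?S = {}" by auto
  have c2: "card ((\<lambda>i. (i,a)) ` ?S) = card ?S" by (rule card_image) (auto simp: inj_on_def)
  have "\<pi> ` ?S = {y\<in>B-{b}. b < y}"
    using bij unfolding bij_betw_def by auto
  moreover have "inj_on \<pi> ?S" using bij unfolding bij_betw_def by (auto intro: inj_on_subset)
  ultimately have c3: "card ?S = card {y\<in>B-{b}. b < y}" by (metis card_image)
  have c4: "{y\<in>B-{b}. b < y} = {y\<in>B. b < y}" by auto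
  show ?thesis
    unfolding inversions_def eq
    using card_Un_disjoint[OF fin1 finite_imageI[OF fin2] disj] c2 c3 c4 by simp
qed

lemma perms2_decomp:
  assumes a: "a \<in> A"
  shows "perms2 A B = (\<Union>b\<in>B. (\<lambda>\<pi>. \<pi>(a:=b)) ` perms2 (A - {a}) (B - {b}))"
proof
  show "perms2 A B \<subseteq> (\<Union>b\<in>B. (\<lambda>\<pi>. \<pi>(a:=b)) ` perms2 (A - {a}) (B - {b}))"
  proof
    fix \<pi> assume p: "\<pi> \<in> perms2 A B"
    then have "\<pi> a \<in> B" using a unfolding perms2_def bij_betw_def by auto
    moreover have "\<pi> = (\<pi>(a:=a))(a := \<pi> a)" by simp
    moreover have "\<pi>(a:=a) \<in> perms2 (A - {a}) (B - {\<pi> a})" by (rule restr_mem[OF p a])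
    ultimately show "\<pi> \<in> (\<Union>b\<in>B. (\<lambda>\<pi>. \<pi>(a:=b)) ` perms2 (A - {a}) (B - {b}))" by blast
  qed
next
  show "(\<Union>b\<in>B. (\<lambda>\<pi>. \<pi>(a:=b)) ` perms2 (A - {a}) (B - {b})) \<subseteq> perms2 A B"
    using upd_mem a by blast
qed

lemma W_formula:
  fixes q :: real
  shows "finite A \<Longrightarrow> finite B \<Longrightarrow> card B = card A \<Longrightarrow>
    (\<Sum>\<pi>\<in>perms2 A B. q ^ inversions \<pi> A) = Zq q (card A)"
proof (induction "card A" arbitrary: A B)
  case 0
  then have "A = {}" "B = {}" by auto
  then show ?case by (simp add: perms2_empty inversions_def)
next
  case (Suc n)
  then have ne: "A \<noteq> {}" by auto
  define a where "a = Max A"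
  have a: "a \<in> A" and amax: "\<forall>x\<in>A. x \<le> a" using Suc.prems ne unfolding a_def by auto
  have cA: "card (A - {a}) = n" using Suc.hyps a by simp
  have IH: "\<And>b. b \<in> B \<Longrightarrow> (\<Sum>\<pi>\<in>perms2 (A - {a}) (B - {b}). q ^ inversions \<pi> (A - {a})) = Zq q n"
  proof -
    fix b assume "b \<in> B"
    then have "card (B - {b}) = n" using Suc.prems Suc.hyps by simp
    then show "(\<Sum>\<pi>\<in>perms2 (A - {a}) (B - {b}). q ^ inversions \<pi> (A - {a})) = Zq q n"
      using Suc.hyps(1)[of "A - {a}" "B - {b}"] cA Suc.prems by simp
  qed
  have "(\<Sum>\<pi>\<in>perms2 A B. q ^ inversions \<pi> A) =
        (\<Sum>b\<in>B. \<Sum>\<pi>\<in>(\<lambda>\<pi>. \<pi>(a:=b)) ` perms2 (A - {a}) (B - {b}). q ^ inversions \<pi> A)"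
    unfolding perms2_decomp[OF a]
  proof (rule sum.UNION_disjoint)
    show "finite B" by fact
    show "\<forall>b\<in>B. finite ((\<lambda>\<pi>. \<pi>(a:=b)) ` perms2 (A - {a}) (B - {b}))"
      using Suc.prems by (auto intro: finite_perms2)
    show "\<forall>b\<in>B. \<forall>c\<in>B. b \<noteq> c \<longrightarrow>
      (\<lambda>\<pi>. \<pi>(a:=b)) ` perms2 (A - {a}) (B - {b}) \<inter> (\<lambda>\<pi>. \<pi>(a:=c)) ` perms2 (A - {a}) (B - {c}) = {}"
      by (auto dest: fun_cong[where x=a])
  qed
  also have "\<dots> = (\<Sum>b\<in>B. \<Sum>\<pi>\<in>perms2 (A - {a}) (B - {b}). q ^ inversions (\<pi>(a:=b)) A)"
  proof (rule sum.cong[OF refl])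
    fix b assume b: "b \<in> B"
    have "inj_on (\<lambda>\<pi>. \<pi>(a:=b)) (perms2 (A - {a}) (B - {b}))"
    proof (rule inj_onI)
      fix f g assume f: "f \<in> perms2 (A - {a}) (B - {b})" and g: "g \<in> perms2 (A - {a}) (B - {b})"
        and e: "f(a:=b) = g(a:=b)"
      have "f a = a" "g a = a" using f g unfolding perms2_def by auto
      then show "f = g" using e by (metis fun_upd_triv fun_upd_upd)
    qed
    then show "(\<Sum>\<pi>\<in>(\<lambda>\<pi>. \<pi>(a:=b)) ` perms2 (A - {a}) (B - {b}). q ^ inversions \<pi> A) =
        (\<Sum>\<pi>\<in>perms2 (A - {a}) (B - {b}). q ^ inversions (\<pi>(a:=b)) A)"
      by (simp add: sum.reindex)
  qed
  also have "\<dots> = (\<Sum>b\<in>B. \<Sum>\<pi>\<in>perms2 (A - {a}) (B - {b}). q ^ card {y\<in>B. b < y} * q ^ inversions \<pi> (A - {a}))"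
    by (intro sum.cong refl) (simp add: inversions_upd[OF Suc.prems(1) a amax] power_add mult.commute)
  also have "\<dots> = (\<Sum>b\<in>B. q ^ card {y\<in>B. b < y} * Zq q n)"
    by (intro sum.cong refl) (simp add: sum_distrib_left[symmetric] IH)
  also have "\<dots> = Zq q n * (\<Sum>j<card B. q^j)"
    by (simp add: sum_distrib_left[symmetric] sum_card_greater Suc.prems mult.commute)
  finally show ?case using Suc.hyps Suc.prems by (metis Zq.simps(2))
qed


lemma card_pairs_less:
  fixes S :: "int set"
  shows "finite S \<Longrightarrow> card {(i,j). i \<in> S \<and> j \<in> S \<and> i < j} = card S choose 2"
proof (induction "card S" arbitrary: S)
  case 0
  then show ?case by simp
next
  case (Suc n)
  then have ne: "S \<noteq> {}" by auto
  define m where "m = Max S"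
  have m: "m \<in> S" and mmax: "\<forall>x\<in>S. x \<le> m" using Suc.prems ne unfolding m_def by auto
  have cS: "card (S - {m}) = n" using Suc.hyps m by simp
  have eq: "{(i,j). i \<in> S \<and> j \<in> S \<and> i < j} =
      {(i,j). i \<in> S - {m} \<and> j \<in> S - {m} \<and> i < j} \<union> (\<lambda>i. (i,m)) ` (S - {m})"
    using m mmax by (auto simp: image_iff order.order_iff_strict)
  have fin1: "finite {(i,j). i \<in> S - {m} \<and> j \<in> S - {m} \<and> i < j}"
    by (rule finite_subset[of _ "S \<times> S"]) (use Suc.prems in auto)
  have disj: "{(i,j). i \<in> S - {m} \<and> j \<in> S - {m} \<and> i < j} \<inter> (\<lambda>i. (i,m)) ` (S - {m}) = {}" by auto
  have c2: "card ((\<lambda>i. (i,m)) ` (S - {m})) = n" using cS by (subst card_image) (auto simp: inj_on_def)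
  have "card {(i,j). i \<in> S \<and> j \<in> S \<and> i < j} = (n choose 2) + n"
    unfolding eq using card_Un_disjoint[OF fin1 _ disj] c2 Suc.hyps(1)[of "S - {m}"] cS Suc.prems by simp
  also have "\<dots> = Suc n choose 2" by (simp add: numeral_2_eq_2)
  finally show ?case using Suc.hyps by simp
qed

lemma inv_lower:
  fixes f :: "int \<Rightarrow> int"
  assumes fin: "finite A" and SA: "S \<subseteq> A" and p: "\<pi> \<in> perms2 A A"
    and con: "\<forall>s\<in>S. \<pi> s = f s"
    and dec: "\<forall>s\<in>S. \<forall>s'\<in>S. s < s' \<longrightarrow> f s' < f s"
  shows "(card S choose 2) + (\<Sum>s\<in>S. nat \<bar>int (card {x\<in>A-S. x<s}) - int (card {y\<in>A - f`S. y < f s})\<bar>)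
           + inversions (\<lambda>i. if i\<in>S then i else \<pi> i) (A - S) \<le> inversions \<pi> A"
proof -
  have bij: "bij_betw \<pi> A A" using p unfolding perms2_def by auto
  have inj: "inj_on \<pi> A" and imA: "\<pi> ` A = A" using bij unfolding bij_betw_def by auto
  have imS: "\<pi> ` S = f ` S" using con by auto
  have imAS: "\<pi> ` (A - S) = A - f ` S"
    using inj_on_image_set_diff[OF inj _ SA] imA imS by auto
  have finS: "finite S" using fin SA finite_subset by auto
  let ?Inv = "{(i, j). i \<in> A \<and> j \<in> A \<and> i < j \<and> \<pi> j < \<pi> i}"
  let ?IS = "{(i,j). i \<in> S \<and> j \<in> S \<and> i < j}"
  let ?IR = "{(i, j). i \<in> A - S \<and> j \<in> A - S \<and> i < j \<and> \<pi> j < \<pi> i}"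
  define L where "L s = {x\<in>A-S. x<s \<and> \<pi> s < \<pi> x}" for s
  define R where "R s = {x\<in>A-S. s<x \<and> \<pi> x < \<pi> s}" for s
  define Ms where "Ms s = (\<lambda>x. (x,s)) ` L s \<union> (\<lambda>x. (s,x)) ` R s" for s
  have finInv: "finite ?Inv" by (rule finite_subset[of _ "A \<times> A"]) (use fin in auto)
  have finIS: "finite ?IS" by (rule finite_subset[of _ "S \<times> S"]) (use finS in auto)
  have finIR: "finite ?IR" by (rule finite_subset[of _ "A \<times> A"]) (use fin in auto)
  have finL: "finite (L s)" for s unfolding L_def using fin by auto
  have finR: "finite (R s)" for s unfolding R_def using fin by auto
  have finMs: "finite (Ms s)" for s unfolding Ms_def using finL finR by auto
  have sub: "?IS \<union> ?IR \<union> (\<Union>s\<in>S. Ms s) \<subseteq> ?Inv"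
  proof -
    have "?IS \<subseteq> ?Inv" using SA con dec by auto
    moreover have "?IR \<subseteq> ?Inv" by auto
    moreover have "Ms s \<subseteq> ?Inv" if "s \<in> S" for s
      using that SA unfolding Ms_def L_def R_def by auto
    ultimately show ?thesis by blast
  qed
  have disj1: "?IS \<inter> ?IR = {}" by auto
  have disj2: "(?IS \<union> ?IR) \<inter> (\<Union>s\<in>S. Ms s) = {}" unfolding Ms_def L_def R_def by auto
  have disjM: "\<forall>s\<in>S. \<forall>t\<in>S. s \<noteq> t \<longrightarrow> Ms s \<inter> Ms t = {}" unfolding Ms_def L_def R_def by auto
  have cM: "card (\<Union>s\<in>S. Ms s) = (\<Sum>s\<in>S. card (Ms s))"
    by (rule card_UN_disjoint[OF finS]) (use finMs disjM in auto)
  have cMs: "nat \<bar>int (card {x\<in>A-S. x<s}) - int (card {y\<in>A - f`S. y < f s})\<bar> \<le> card (Ms s)"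
    if s: "s \<in> S" for s
  proof -
    have cb: "card {x\<in>A-S. \<pi> x < \<pi> s} = card {y\<in>A - f`S. y < f s}"
    proof -
      have "\<pi> ` {x\<in>A-S. \<pi> x < \<pi> s} = {y\<in>A - f`S. y < f s}"
        using imAS con s by auto
      moreover have "inj_on \<pi> {x\<in>A-S. \<pi> x < \<pi> s}" using inj by (auto intro: inj_on_subset)
      ultimately show ?thesis by (metis card_image)
    qed
    have ne: "\<pi> x \<noteq> \<pi> s" if "x \<in> A - S" for x
      using inj that s SA unfolding inj_on_def by blast
    have s1: "{x\<in>A-S. x<s} \<subseteq> L s \<union> {x\<in>A-S. \<pi> x < \<pi> s}"
      unfolding L_def using ne by fastforce
    have nes: "\<And>x. x \<in> A - S \<Longrightarrow> x \<noteq> s" using s by auto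
    have s2: "{x\<in>A-S. \<pi> x < \<pi> s} \<subseteq> R s \<union> {x\<in>A-S. x<s}"
    proof
      fix x assume x: "x \<in> {x\<in>A-S. \<pi> x < \<pi> s}"
      then have "x \<noteq> s" using nes by auto
      then show "x \<in> R s \<union> {x\<in>A-S. x<s}" using x unfolding R_def by (auto simp: neq_iff)
    qed
    have f3: "finite {x\<in>A-S. \<pi> x < \<pi> s}" "finite {x\<in>A-S. x<s}" using fin by auto
    have "card {x\<in>A-S. x<s} \<le> card (L s) + card {x\<in>A-S. \<pi> x < \<pi> s}"
      using card_mono[OF _ s1] card_Un_le[of "L s" "{x\<in>A-S. \<pi> x < \<pi> s}"] finL f3 by fastforce
    moreover have "card {x\<in>A-S. \<pi> x < \<pi> s} \<le> card (R s) + card {x\<in>A-S. x<s}"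
      using card_mono[OF _ s2] card_Un_le[of "R s" "{x\<in>A-S. x<s}"] finR f3 by fastforce
    moreover have "card (Ms s) = card (L s) + card (R s)"
    proof -
      have "card (Ms s) = card ((\<lambda>x. (x,s)) ` L s) + card ((\<lambda>x. (s,x)) ` R s)"
        unfolding Ms_def by (rule card_Un_disjoint) (use finL finR s in \<open>auto simp: L_def R_def\<close>)
      also have "\<dots> = card (L s) + card (R s)"
        by (subst card_image, simp add: inj_on_def)+ simp
      finally show ?thesis .
    qed
    ultimately show ?thesis using cb by linarith
  qed
  have invR: "inversions (\<lambda>i. if i\<in>S then i else \<pi> i) (A - S) = card ?IR"
    unfolding inversions_def by (rule arg_cong[where f=card]) auto
  have "(card S choose 2) + (\<Sum>s\<in>S. nat \<bar>int (card {x\<in>A-S. x<s}) - int (card {y\<in>A - f`S. y < f s})\<bar>)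
           + inversions (\<lambda>i. if i\<in>S then i else \<pi> i) (A - S)
        \<le> card ?IS + card (\<Union>s\<in>S. Ms s) + card ?IR"
    using card_pairs_less[OF finS] cM sum_mono[of S _ "\<lambda>s. card (Ms s)", OF cMs] invR by simp
  also have "\<dots> = card (?IS \<union> ?IR \<union> (\<Union>s\<in>S. Ms s))"
    using card_Un_disjoint[OF finIS finIR disj1] card_Un_disjoint[of "?IS \<union> ?IR" "\<Union>s\<in>S. Ms s"]
      finIS finIR finMs finS disj2 by simp
  also have "\<dots> \<le> card ?Inv" by (rule card_mono[OF finInv sub])
  finally show ?thesis unfolding inversions_def .
qed


lemma res_mem:
  fixes f :: "int \<Rightarrow> int"
  assumes SA: "S \<subseteq> A" and p: "\<pi> \<in> perms2 A A" and con: "\<forall>s\<in>S. \<pi> s = f s"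
  shows "(\<lambda>i. if i\<in>S then i else \<pi> i) \<in> perms2 (A - S) (A - f ` S)"
proof -
  have bij: "bij_betw \<pi> A A" and idd: "\<forall>x. x \<notin> A \<longrightarrow> \<pi> x = x" using p unfolding perms2_def by auto
  have inj: "inj_on \<pi> A" and imA: "\<pi> ` A = A" using bij unfolding bij_betw_def by auto
  have imS: "\<pi> ` S = f ` S" using con by auto
  have imAS: "\<pi> ` (A - S) = A - f ` S"
    using inj_on_image_set_diff[OF inj _ SA] imA imS by auto
  have "bij_betw \<pi> (A - S) (A - f ` S)"
    unfolding bij_betw_def using imAS inj by (auto intro: inj_on_subset)
  then have "bij_betw (\<lambda>i. if i\<in>S then i else \<pi> i) (A - S) (A - f ` S)"
    by (rule bij_betw_cong[THEN iffD1, rotated]) auto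
  then show ?thesis using idd unfolding perms2_def by auto
qed

lemma constrained_sum_bound:
  fixes f :: "int \<Rightarrow> int" and q :: real
  assumes fin: "finite A" and SA: "S \<subseteq> A" and TA: "f ` S \<subseteq> A"
    and dec: "\<forall>s\<in>S. \<forall>s'\<in>S. s < s' \<longrightarrow> f s' < f s"
    and q: "0 \<le> q" "q \<le> 1"
  shows "(\<Sum>\<pi>\<in>{\<pi>\<in>perms2 A A. \<forall>s\<in>S. \<pi> s = f s}. q ^ inversions \<pi> A)
    \<le> q ^ ((card S choose 2) + (\<Sum>s\<in>S. nat \<bar>int (card {x\<in>A-S. x<s}) - int (card {y\<in>A - f`S. y < f s})\<bar>))
       * Zq q (card A - card S)"
proof -
  let ?F = "{\<pi>\<in>perms2 A A. \<forall>s\<in>S. \<pi> s = f s}"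
  let ?E = "(card S choose 2) + (\<Sum>s\<in>S. nat \<bar>int (card {x\<in>A-S. x<s}) - int (card {y\<in>A - f`S. y < f s})\<bar>)"
  let ?res = "\<lambda>\<pi>. (\<lambda>i. if i\<in>S then i else \<pi> i)"
  have finS: "finite S" using fin SA finite_subset by auto
  have injf: "inj_on f S"
  proof (rule inj_onI)
    fix x y assume "x \<in> S" "y \<in> S" "f x = f y"
    then show "x = y" using dec by (metis less_irrefl neq_iff)
  qed
  have finF: "finite ?F" using finite_perms2[OF fin fin] by auto
  have "(\<Sum>\<pi>\<in>?F. q ^ inversions \<pi> A) \<le> (\<Sum>\<pi>\<in>?F. q ^ ?E * q ^ inversions (?res \<pi>) (A - S))"
  proof (rule sum_mono)
    fix \<pi> assume "\<pi> \<in> ?F"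
    then have "?E + inversions (?res \<pi>) (A - S) \<le> inversions \<pi> A"
      using inv_lower[OF fin SA _ _ dec] by auto
    then show "q ^ inversions \<pi> A \<le> q ^ ?E * q ^ inversions (?res \<pi>) (A - S)"
      using q by (simp add: power_add[symmetric] power_decreasing)
  qed
  also have "\<dots> = q ^ ?E * (\<Sum>\<pi>\<in>?F. q ^ inversions (?res \<pi>) (A - S))"
    by (simp add: sum_distrib_left)
  also have "(\<Sum>\<pi>\<in>?F. q ^ inversions (?res \<pi>) (A - S)) = (\<Sum>\<rho>\<in>?res ` ?F. q ^ inversions \<rho> (A - S))"
  proof -
    have "inj_on ?res ?F"
    proof (rule inj_onI)
      fix g h assume g: "g \<in> ?F" and h: "h \<in> ?F" and e: "?res g = ?res h"
      show "g = h"
      proof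
        fix x show "g x = h x"
          using g h fun_cong[OF e, of x] by (cases "x \<in> S") auto
      qed
    qed
    then show ?thesis by (simp add: sum.reindex)
  qed
  also have "\<dots> \<le> (\<Sum>\<rho>\<in>perms2 (A - S) (A - f ` S). q ^ inversions \<rho> (A - S))"
  proof (rule sum_mono2)
    show "finite (perms2 (A - S) (A - f ` S))" using fin by (intro finite_perms2) auto
    show "?res ` ?F \<subseteq> perms2 (A - S) (A - f ` S)" using res_mem[OF SA] by blast
  qed (use q in auto)
  also have "\<dots> = Zq q (card (A - S))"
    by (rule W_formula) (use fin finS SA TA injf in \<open>auto simp: card_Diff_subset card_image\<close>)
  also have "card (A - S) = card A - card S" using finS SA by (simp add: card_Diff_subset)
  finally show ?thesis using q by (simp add: mult_left_mono)
qed

definition Phi :: "int \<Rightarrow> int set \<Rightarrow> nat" where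
  "Phi h S = (\<Sum>s\<in>S. nat \<bar>2 * s - 2 * int (card {x\<in>S. x<s}) + h\<bar>)"

lemma card_lt_interval:
  fixes n s :: int
  assumes "-n \<le> s" "s \<le> n + 1"
  shows "card {x\<in>{-n..n}. x < s} = nat (s + n)"
proof -
  have "{x\<in>{-n..n}. x < s} = {-n..s-1}" using assms by auto
  then show ?thesis by simp
qed

lemma count_identity:
  fixes n d s :: int
  assumes SA: "S \<subseteq> {-n..n}" and TA: "(\<lambda>s. d - s) ` S \<subseteq> {-n..n}" and s: "s \<in> S"
  shows "int (card {x\<in>{-n..n}-S. x<s}) - int (card {y\<in>{-n..n} - (\<lambda>s. d - s)`S. y < d - s})
    = 2 * s - 2 * int (card {x\<in>S. x<s}) + (int (card S) - 1 - d)"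
proof -
  let ?A = "{-n..n}"
  have finS: "finite S" using SA finite_subset by blast
  have sA: "s \<in> ?A" and tA: "d - s \<in> ?A" using SA TA s by auto
  have fA1: "finite {x\<in>?A. x<s}" by (rule finite_subset[of _ ?A]) auto
  have c1: "card {x\<in>?A-S. x<s} = card {x\<in>?A. x<s} - card {x\<in>S. x<s}"
  proof -
    have E: "{x\<in>?A-S. x<s} = {x\<in>?A. x<s} - {x\<in>S. x<s}" by blast
    have "finite {x\<in>S. x<s}" using finS by auto
    moreover have "{x\<in>S. x<s} \<subseteq> {x\<in>?A. x<s}" using SA by blast
    ultimately show ?thesis unfolding E by (rule card_Diff_subset)
  qed
  have le1: "card {x\<in>S. x<s} \<le> card {x\<in>?A. x<s}" by (rule card_mono[OF fA1]) (use SA in auto)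
  have c2: "card {y\<in>?A - (\<lambda>s. d - s)`S. y < d - s} = card {y\<in>?A. y < d - s} - card {y\<in>(\<lambda>s. d - s)`S. y < d - s}"
  proof -
    have E: "{y\<in>?A - (\<lambda>s. d - s)`S. y < d - s} = {y\<in>?A. y < d - s} - {y\<in>(\<lambda>s. d - s)`S. y < d - s}" by blast
    have "finite {y\<in>(\<lambda>s. d - s)`S. y < d - s}" using finS by simp
    moreover have "{y\<in>(\<lambda>s. d - s)`S. y < d - s} \<subseteq> {y\<in>?A. y < d - s}" using TA by blast
    ultimately show ?thesis unfolding E by (rule card_Diff_subset)
  qed
  have fA2: "finite {y\<in>?A. y < d - s}" by (rule finite_subset[of _ ?A]) auto
  have le2: "card {y\<in>(\<lambda>s. d - s)`S. y < d - s} \<le> card {y\<in>?A. y < d - s}" by (rule card_mono[OF fA2]) (use TA in auto)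
  have c3: "card {y\<in>(\<lambda>s. d - s)`S. y < d - s} = card {x\<in>S. s < x}"
  proof -
    have "{y\<in>(\<lambda>s. d - s)`S. y < d - s} = (\<lambda>s. d - s) ` {x\<in>S. s < x}" unfolding image_def by auto
    moreover have "inj_on (\<lambda>s. d - s) {x\<in>S. s < x}" by (auto simp: inj_on_def)
    ultimately show ?thesis by (simp add: card_image)
  qed
  have c4: "card S = card {x\<in>S. x<s} + 1 + card {x\<in>S. s < x}"
  proof -
    have "S = {x\<in>S. x<s} \<union> ({s} \<union> {x\<in>S. s < x})" using s by auto
    then have "card S = card ({x\<in>S. x<s} \<union> ({s} \<union> {x\<in>S. s < x}))" by simp
    also have "\<dots> = card {x\<in>S. x<s} + card ({s} \<union> {x\<in>S. s < x})"
      by (rule card_Un_disjoint) (use finS in auto)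
    also have "card ({s} \<union> {x\<in>S. s < x}) = 1 + card {x\<in>S. s < x}"
      by (subst card_Un_disjoint) (use finS in auto)
    finally show ?thesis by simp
  qed
  have a1: "card {x\<in>?A. x<s} = nat (s + n)" using sA by (intro card_lt_interval) auto
  have a2: "card {y\<in>?A. y < d - s} = nat (d - s + n)" using tA by (intro card_lt_interval) auto
  have e1: "int (card {x\<in>?A-S. x<s}) = (s + n) - int (card {x\<in>S. x<s})"
    using c1 le1 a1 sA by (simp add: of_nat_diff)
  have e2: "int (card {y\<in>?A - (\<lambda>s. d - s)`S. y < d - s}) = (d - s + n) - int (card {x\<in>S. s < x})"
    using c2 c3 le2 a2 tA by (simp add: of_nat_diff)
  have e3: "int (card S) = int (card {x\<in>S. x<s}) + 1 + int (card {x\<in>S. s < x})"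
    using c4 by simp
  show ?thesis using e1 e2 e3 by linarith
qed

lemma interval_bound:
  fixes n d :: int and q :: real
  assumes SA: "S \<subseteq> {-n..n}" and TA: "(\<lambda>s. d - s) ` S \<subseteq> {-n..n}" and q: "0 \<le> q" "q \<le> 1"
  shows "(\<Sum>\<pi>\<in>{\<pi>\<in>perms_of {-n..n}. \<forall>s\<in>S. \<pi> s = d - s}. q ^ inversions \<pi> {-n..n})
    \<le> q ^ ((card S choose 2) + Phi (int (card S) - 1 - d) S) * Zq q (card {-n..n} - card S)"
proof -
  have eq: "(\<Sum>s\<in>S. nat \<bar>int (card {x\<in>{-n..n}-S. x<s}) - int (card {y\<in>{-n..n} - (\<lambda>s. d - s)`S. y < d - s})\<bar>)
     = Phi (int (card S) - 1 - d) S"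
    unfolding Phi_def by (rule sum.cong[OF refl], subst count_identity[OF SA TA], assumption, rule refl)
  have dec: "\<forall>s\<in>S. \<forall>s'\<in>S. s < s' \<longrightarrow> d - s' < d - s" by auto
  show ?thesis
    using constrained_sum_bound[OF finite_atLeastAtMost_int SA TA dec q] unfolding perms_of_eq eq .
qed


fun Aco :: "real \<Rightarrow> nat \<Rightarrow> real" where
  "Aco y 0 = 1"
| "Aco y (Suc a) = Aco y a / (1 - y ^ Suc a)"

fun Nco :: "real \<Rightarrow> nat \<Rightarrow> nat \<Rightarrow> real" where
  "Nco y 0 m = 1"
| "Nco y (Suc a) m = Nco y a m * (1 - y ^ (m + a + 1)) / (1 - y ^ (a + 1))"

lemma pow_lt1: "0 \<le> (y::real) \<Longrightarrow> y < 1 \<Longrightarrow> 0 < n \<Longrightarrow> y ^ n < 1"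
  by (simp add: power_less_one_iff)

lemma pow_Suc_lt1: "0 \<le> (y::real) \<Longrightarrow> y < 1 \<Longrightarrow> y * y ^ a < 1"
  using pow_lt1[of y "Suc a"] by simp

lemma pow_Suc_le1: "0 \<le> (y::real) \<Longrightarrow> y < 1 \<Longrightarrow> y * y ^ a \<le> 1"
  using pow_Suc_lt1[of y a] by simp

lemma Aco_pos: "0 \<le> y \<Longrightarrow> y < 1 \<Longrightarrow> 0 < Aco y a"
proof (induction a)
  case (Suc a) then show ?case using pow_Suc_lt1[of y a] by simp
qed simp

lemma Nco_nonneg: "0 \<le> y \<Longrightarrow> y < 1 \<Longrightarrow> 0 \<le> Nco y a m"
proof (induction a)
  case (Suc a)
  then show ?case using pow_Suc_lt1[of y a] pow_Suc_le1[of y "m+a"] by simp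
qed simp

lemma Nco_le_Aco: "0 \<le> y \<Longrightarrow> y < 1 \<Longrightarrow> Nco y a m \<le> Aco y a"
proof (induction a)
  case (Suc a)
  have h1: "0 \<le> y ^ (m + a + 1)" "y ^ (a + 1) < 1" using Suc.prems pow_lt1[of y "a+1"] by auto
  have "Nco y a m * (1 - y ^ (m + a + 1)) \<le> Aco y a * 1"
    using Suc h1 Nco_nonneg[of y a m] Aco_pos[of y a] pow_Suc_le1[of y "m+a"] by (intro mult_mono) auto
  then show ?case using h1 by (simp add: divide_right_mono)
qed simp

lemma exp_ge_inv: "0 \<le> (t::real) \<Longrightarrow> t \<le> y \<Longrightarrow> y < 1 \<Longrightarrow> 1 / (1 - t) \<le> exp (t / (1 - y))"
proof -
  assume t: "0 \<le> t" "t \<le> y" "y < 1"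
  have "1 / (1 - t) = 1 + t / (1 - t)" using t by (simp add: field_simps)
  also have "\<dots> \<le> exp (t / (1 - t))" by (rule exp_ge_add_one_self_aux) (use t in auto)
  also have "t / (1 - t) \<le> t / (1 - y)" using t by (intro divide_left_mono) auto
  then have "exp (t / (1 - t)) \<le> exp (t / (1 - y))" by simp
  finally show ?thesis .
qed

lemma Aco_le_exp_aux:
  assumes "0 \<le> y" "y < 1"
  shows "Aco y a \<le> exp ((\<Sum>i\<in>{1..a}. y ^ i) / (1 - y))"
proof (induction a)
  case (Suc a)
  have t1: "0 \<le> y ^ Suc a" using assms by simp
  have t2: "y ^ Suc a \<le> y" using power_decreasing[of 1 "Suc a" y] assms by simp
  have t3: "y ^ Suc a < 1" using t2 assms by simp
  note t = t1 t2 t3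
  have "Aco y (Suc a) = Aco y a * (1 / (1 - y ^ Suc a))" by simp
  also have "\<dots> \<le> exp ((\<Sum>i\<in>{1..a}. y ^ i) / (1 - y)) * exp (y ^ Suc a / (1 - y))"
    using Suc exp_ge_inv[OF t(1,2) assms(2)] Aco_pos[OF assms] t
    by (intro mult_mono) auto
  also have "\<dots> = exp ((\<Sum>i\<in>{1..Suc a}. y ^ i) / (1 - y))"
    by (simp add: exp_add[symmetric] add_divide_distrib)
  finally show ?case .
qed simp

lemma geom_partial:
  assumes "0 \<le> (y::real)" "y < 1"
  shows "(\<Sum>i\<in>{1..a}. y ^ i) \<le> y / (1 - y)"
proof -
  have "(\<Sum>i\<in>{1..a}. y ^ i) = y * (\<Sum>i<a. y ^ i)"
  proof (induction a)
    case (Suc a) then show ?case by (simp add: distrib_left)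
  qed simp
  also have "(\<Sum>i<a. y ^ i) = (1 - y ^ a) / (1 - y)" using assms by (simp add: sum_gp_strict)
  also have "\<dots> \<le> 1 / (1 - y)" using assms by (intro divide_right_mono) auto
  finally show ?thesis using assms by (simp add: mult_left_mono)
qed

definition Abar :: "real \<Rightarrow> real" where "Abar y = exp (y / (1 - y) / (1 - y))"

lemma Aco_le_Abar:
  assumes "0 \<le> y" "y < 1"
  shows "Aco y a \<le> Abar y"
proof -
  have "Aco y a \<le> exp ((\<Sum>i\<in>{1..a}. y ^ i) / (1 - y))" by (rule Aco_le_exp_aux[OF assms])
  also have "\<dots> \<le> Abar y"
  proof -
    have "(\<Sum>i\<in>{1..a}. y ^ i) / (1 - y) \<le> y / (1 - y) / (1 - y)"
      using geom_partial[OF assms, of a] assms by (intro divide_right_mono) auto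
    then show ?thesis unfolding Abar_def by simp
  qed
  finally show ?thesis .
qed

lemma Abar_ge1: "0 \<le> y \<Longrightarrow> y < 1 \<Longrightarrow> 1 \<le> Abar y"
  unfolding Abar_def by simp

lemma Nco_shift:
  assumes "0 \<le> y" "y < 1"
  shows "Nco y a (m+1) * (1 - y ^ (m+1)) = Nco y a m * (1 - y ^ (m + a + 1))"
proof (induction a)
  case 0 then show ?case by simp
next
  case (Suc a)
  have d: "1 - y ^ (a + 1) \<noteq> 0" using pow_lt1[OF assms, of "a+1"] by simp
  have "Nco y (Suc a) (m+1) * (1 - y ^ (m+1)) =
        (Nco y a (m+1) * (1 - y ^ (m+1))) * (1 - y ^ (m + 1 + a + 1)) / (1 - y ^ (a + 1))"
    by simp
  also have "\<dots> = Nco y a m * (1 - y ^ (m + a + 1)) * (1 - y ^ (m + 1 + a + 1)) / (1 - y ^ (a + 1))"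
    using Suc by simp
  also have "\<dots> = Nco y (Suc a) m * (1 - y ^ (m + Suc a + 1))"
    by (simp add: field_simps)
  finally show ?case .
qed

lemma Nco_pascal:
  assumes "0 \<le> y" "y < 1"
  shows "Nco y (a+1) (m+1) = Nco y (a+1) m + y ^ (m+1) * Nco y a (m+1)"
proof -
  have d: "1 - y ^ (a + 1) \<noteq> 0" "1 - y ^ (m + 1) \<noteq> 0"
    using pow_lt1[OF assms, of "a+1"] pow_lt1[OF assms, of "m+1"] by auto
  have s: "Nco y a m * (1 - y ^ (m + a + 1)) = Nco y a (m+1) * (1 - y ^ (m+1))"
    using Nco_shift[OF assms] by simp
  have "Nco y (a+1) m = Nco y a (m+1) * (1 - y ^ (m+1)) / (1 - y ^ (a + 1))"
    using s by simp
  moreover have "Nco y (a+1) (m+1) = Nco y a (m+1) * (1 - y ^ (m + 1 + a + 1)) / (1 - y ^ (a + 1))"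
    by simp
  ultimately show ?thesis using d
    by (simp add: field_simps power_add)
qed

lemma Nco_zero: "0 \<le> y \<Longrightarrow> y < 1 \<Longrightarrow> Nco y a 0 = 1"
proof (induction a)
  case (Suc a)
  then show ?case using pow_Suc_lt1[of y a] by simp
qed simp

lemma Nco_sum:
  assumes "0 \<le> y" "y < 1"
  shows "(\<Sum>m'\<le>m. y ^ m' * Nco y a m') = Nco y (a+1) m"
proof (induction m)
  case 0
  show ?case using Nco_zero[OF assms, of a] Nco_zero[OF assms, of "a+1"] by simp
next
  case (Suc m)
  then show ?case using Nco_pascal[OF assms, of a m] by simp
qed


definition Gfun :: "real \<Rightarrow> nat \<Rightarrow> int \<Rightarrow> real" where
  "Gfun x K z = (if 1 \<le> z then x ^ (K * nat z) * Aco (x^2) K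
      else x ^ K * (\<Sum>a\<le>K. Nco (x^2) a (nat ((-1 - z) div 2)) * Aco (x^2) (K - a)))"

lemma Gfun_nonneg:
  assumes "0 \<le> x" "x < 1"
  shows "0 \<le> Gfun x K z"
proof -
  have y: "0 \<le> x^2" "x^2 < 1" using assms by (auto simp: power_less_one_iff)
  have A: "\<And>a. 0 \<le> Aco (x^2) a" using Aco_pos[OF y] less_imp_le by blast
  show ?thesis unfolding Gfun_def
    using A Nco_nonneg[OF y] assms by (auto intro!: sum_nonneg mult_nonneg_nonneg)
qed

lemma R_pos:
  assumes x: "0 \<le> x" "x < 1" and z: "1 \<le> z"
  shows "(\<Sum>j<n. x ^ nat \<bar>z + 2 * int j\<bar> * Gfun x K (z + 2 * int j)) \<le> Gfun x (K+1) z"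
proof -
  have y: "0 \<le> x^2" "x^2 < 1" using x by (auto simp: power_less_one_iff)
  let ?r = "(x^2) ^ (K+1)"
  have r: "0 \<le> ?r" "?r < 1" using y pow_lt1[OF y, of "K+1"] by auto
  have tm: "x ^ nat \<bar>z + 2 * int j\<bar> * Gfun x K (z + 2 * int j) = Aco (x^2) K * x ^ ((K+1) * nat z) * ?r ^ j" for j
  proof -
    have "nat \<bar>z + 2 * int j\<bar> = nat z + 2 * j" "nat (z + 2 * int j) = nat z + 2 * j" using z by auto
    moreover have "x ^ (nat z + 2 * j) * (x ^ (K * (nat z + 2 * j))) = x ^ ((K+1) * nat z) * ((x^2) ^ (K+1)) ^ j"
      by (simp add: power_add[symmetric] power_mult[symmetric] algebra_simps)
    ultimately show ?thesis unfolding Gfun_def using z by (simp add: algebra_simps)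
  qed
  have "(\<Sum>j<n. x ^ nat \<bar>z + 2 * int j\<bar> * Gfun x K (z + 2 * int j)) = Aco (x^2) K * x ^ ((K+1) * nat z) * (\<Sum>j<n. ?r ^ j)"
    by (simp add: tm sum_distrib_left)
  also have "(\<Sum>j<n. ?r ^ j) = (1 - ?r ^ n) / (1 - ?r)" using r by (simp add: sum_gp_strict)
  also have "\<dots> \<le> 1 / (1 - ?r)" using r by (intro divide_right_mono) auto
  finally have "(\<Sum>j<n. x ^ nat \<bar>z + 2 * int j\<bar> * Gfun x K (z + 2 * int j)) \<le> Aco (x^2) K * x ^ ((K+1) * nat z) * (1 / (1 - ?r))"
    using Aco_pos[OF y, of K] x by (simp add: mult_left_mono)
  also have "\<dots> = Gfun x (K+1) z" unfolding Gfun_def using z by (simp add: algebra_simps)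
  finally show ?thesis .
qed

lemma sum_split_add: "(\<Sum>j<a + b. f j) = (\<Sum>j<a. f j) + (\<Sum>j<b. f (j + a))" for f :: "nat \<Rightarrow> real"
  by (induction b) (auto simp: add.commute)

lemma sum_split_le:
  fixes f :: "nat \<Rightarrow> real"
  assumes nn: "\<And>j. 0 \<le> f j"
  shows "(\<Sum>j<n. f j) \<le> (\<Sum>j<a. f j) + (\<Sum>j<n - a. f (j + a))"
proof (cases "n \<le> a")
  case True
  have "(\<Sum>j<n. f j) \<le> (\<Sum>j<a. f j)" using True nn by (intro sum_mono2) auto
  moreover have "0 \<le> (\<Sum>j<n - a. f (j + a))" using nn by (intro sum_nonneg) auto
  ultimately show ?thesis by linarith
next
  case False
  then have "n = a + (n - a)" by simp
  then have "(\<Sum>j<n. f j) = (\<Sum>j<a + (n - a). f j)" by simp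
  also have "\<dots> = (\<Sum>j<a. f j) + (\<Sum>j<n - a. f (j + a))" by (rule sum_split_add)
  finally show ?thesis by simp
qed

lemma R_neg:
  assumes x: "0 \<le> x" "x < 1" and z: "z = - (2 * int m + 1)"
  shows "(\<Sum>j<n. x ^ nat \<bar>z + 2 * int j\<bar> * Gfun x K (z + 2 * int j)) \<le> Gfun x (K+1) z"
proof -
  have y: "0 \<le> x^2" "x^2 < 1" using x by (auto simp: power_less_one_iff)
  define f where "f j = x ^ nat \<bar>z + 2 * int j\<bar> * Gfun x K (z + 2 * int j)" for j
  have nn: "0 \<le> f j" for j unfolding f_def using Gfun_nonneg[OF x] x by simp
  have "(\<Sum>j<n. f j) \<le> (\<Sum>j<m+1. f j) + (\<Sum>j<n - (m+1). f (j + (m+1)))"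
    by (rule sum_split_le[OF nn])
  also have "(\<Sum>j<n - (m+1). f (j + (m+1))) \<le> Gfun x (K+1) 1"
  proof -
    have "f (j + (m+1)) = x ^ nat \<bar>1 + 2 * int j\<bar> * Gfun x K (1 + 2 * int j)" for j
    proof -
      have e: "z + 2 * int (j + (m+1)) = 1 + 2 * int j" using z by simp
      show ?thesis unfolding f_def e ..
    qed
    then show ?thesis using R_pos[OF x, where z=1 and n="n - (m+1)" and K=K] by simp
  qed
  also have "(\<Sum>j<m+1. f j) = (\<Sum>i<m+1. f (m - i))"
    using sum.nat_diff_reindex[of f "m+1"] by simp
  also have "\<dots> = (\<Sum>i<m+1. x ^ (K+1) * (\<Sum>a\<le>K. Aco (x^2) (K - a) * ((x^2)^i * Nco (x^2) a i)))"
  proof (rule sum.cong[OF refl])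
    fix i assume i: "i \<in> {..<m+1}"
    then have e1: "z + 2 * int (m - i) = - (2 * int i + 1)" using z by auto
    have e2: "nat \<bar>- (2 * int i + 1)\<bar> = 2 * i + 1" by simp
    have e3: "nat ((-1 - (- (2 * int i + 1))) div 2) = i" by simp
    have e4: "x ^ (2 * i + 1) * x ^ K = x ^ (K+1) * (x^2)^i"
      by (simp add: power_add[symmetric] power_mult[symmetric] algebra_simps)
    have "f (m - i) = x ^ (2 * i + 1) * (x ^ K * (\<Sum>a\<le>K. Nco (x^2) a i * Aco (x^2) (K - a)))"
      unfolding f_def e1 e2 Gfun_def e3 by simp
    also have "\<dots> = (x ^ (2 * i + 1) * x ^ K) * (\<Sum>a\<le>K. Nco (x^2) a i * Aco (x^2) (K - a))"
      by (simp add: algebra_simps)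
    also have "\<dots> = x ^ (K+1) * (\<Sum>a\<le>K. Aco (x^2) (K - a) * ((x^2)^i * Nco (x^2) a i))"
      unfolding e4 by (simp add: sum_distrib_left algebra_simps)
    finally show "f (m - i) = x ^ (K+1) * (\<Sum>a\<le>K. Aco (x^2) (K - a) * ((x^2)^i * Nco (x^2) a i))" .
  qed
  also have "\<dots> = x ^ (K+1) * (\<Sum>a\<le>K. Aco (x^2) (K - a) * (\<Sum>i\<le>m. (x^2)^i * Nco (x^2) a i))"
  proof -
    have "(\<Sum>i\<le>m. \<Sum>a\<le>K. Aco (x^2) (K - a) * ((x^2)^i * Nco (x^2) a i)) =
          (\<Sum>a\<le>K. \<Sum>i\<le>m. Aco (x^2) (K - a) * ((x^2)^i * Nco (x^2) a i))" by (rule sum.swap)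
    then show ?thesis by (simp add: sum_distrib_left[symmetric] lessThan_Suc_atMost)
  qed
  also have "\<dots> = x ^ (K+1) * (\<Sum>a\<le>K. Aco (x^2) (K - a) * Nco (x^2) (a+1) m)"
    by (simp add: Nco_sum[OF y])
  finally have L: "(\<Sum>j<n. f j) \<le> x ^ (K+1) * (\<Sum>a\<le>K. Aco (x^2) (K - a) * Nco (x^2) (a+1) m) + Gfun x (K+1) 1"
    by simp
  have "Gfun x (K+1) z = x ^ (K+1) * (\<Sum>a\<le>Suc K. Nco (x^2) a m * Aco (x^2) (Suc K - a))"
  proof -
    have "nat ((-1 - z) div 2) = m" using z by simp
    moreover have "\<not> 1 \<le> z" using z by simp
    ultimately show ?thesis unfolding Gfun_def by simp
  qed
  also have "\<dots> = x ^ (K+1) * (Nco (x^2) 0 m * Aco (x^2) (Suc K) + (\<Sum>a\<le>K. Nco (x^2) (Suc a) m * Aco (x^2) (K - a)))"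
    by (simp only: sum.atMost_Suc_shift diff_Suc_Suc diff_zero)
  also have "\<dots> = x ^ (K+1) * (\<Sum>a\<le>K. Aco (x^2) (K - a) * Nco (x^2) (a+1) m) + Gfun x (K+1) 1"
    unfolding Gfun_def by (simp add: algebra_simps)
  finally show ?thesis using L unfolding f_def by simp
qed


lemma R_odd:
  assumes x: "0 \<le> x" "x < 1" and z: "odd z"
  shows "(\<Sum>j<n. x ^ nat \<bar>z + 2 * int j\<bar> * Gfun x K (z + 2 * int j)) \<le> Gfun x (K+1) z"
proof (cases "1 \<le> z")
  case True
  then show ?thesis by (rule R_pos[OF x])
next
  case False
  define m where "m = nat ((-1 - z) div 2)"
  have "z = - (2 * int m + 1)" using False z unfolding m_def by (auto elim!: oddE)
  then show ?thesis by (rule R_neg[OF x])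
qed

definition Tset :: "int \<Rightarrow> int \<Rightarrow> nat \<Rightarrow> int set set" where
  "Tset L U K = {S. S \<subseteq> {L..U} \<and> card S = K}"

lemma finite_Tset: "finite (Tset L U K)"
  unfolding Tset_def by (rule finite_subset[of _ "Pow {L..U}"]) auto

lemma Phi_empty: "Phi h {} = 0" unfolding Phi_def by simp

lemma Phi_insert:
  assumes fin: "finite S'" and s: "s \<notin> S'" and lt: "\<forall>t\<in>S'. s < t"
  shows "Phi h (insert s S') = nat \<bar>2 * s + h\<bar> + Phi (h - 2) S'"
proof -
  have c0: "card {x\<in>insert s S'. x < s} = 0" using lt fin by auto
  have c1: "card {x\<in>insert s S'. x < t} = card {x\<in>S'. x < t} + 1" if t: "t \<in> S'" for t
  proof -
    have "{x\<in>insert s S'. x < t} = insert s {x\<in>S'. x < t}" using lt t by auto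
    then show ?thesis using fin s by simp
  qed
  have "Phi h (insert s S') = nat \<bar>2 * s - 2 * int (card {x\<in>insert s S'. x<s}) + h\<bar>
      + (\<Sum>t\<in>S'. nat \<bar>2 * t - 2 * int (card {x\<in>insert s S'. x<t}) + h\<bar>)"
    unfolding Phi_def using fin s by simp
  also have "(\<Sum>t\<in>S'. nat \<bar>2 * t - 2 * int (card {x\<in>insert s S'. x<t}) + h\<bar>) = Phi (h - 2) S'"
    unfolding Phi_def
  proof (rule sum.cong[OF refl])
    fix t assume t: "t \<in> S'"
    show "nat \<bar>2 * t - 2 * int (card {x\<in>insert s S'. x<t}) + h\<bar> = nat \<bar>2 * t - 2 * int (card {x\<in>S'. x<t}) + (h - 2)\<bar>"
      unfolding c1[OF t] by (simp add: algebra_simps)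
  qed
  finally show ?thesis using c0 by simp
qed

lemma Tset_0: "Tset L U 0 = {{}}"
proof -
  have "S = {}" if "S \<subseteq> {L..U}" "card S = 0" for S
    using that finite_subset[OF that(1)] by auto
  then show ?thesis unfolding Tset_def by auto
qed

lemma Tset_Suc:
  "Tset L U (Suc K) = (\<Union>s\<in>{L..U}. insert s ` Tset (s+1) U K)"
proof
  show "Tset L U (Suc K) \<subseteq> (\<Union>s\<in>{L..U}. insert s ` Tset (s+1) U K)"
  proof
    fix S assume S: "S \<in> Tset L U (Suc K)"
    then have sub: "S \<subseteq> {L..U}" and c: "card S = Suc K" unfolding Tset_def by auto
    have fin: "finite S" using sub by (rule finite_subset) simp
    have ne: "S \<noteq> {}" using c by auto
    define s where "s = Min S"
    have s: "s \<in> S" "\<forall>x\<in>S. s \<le> x" using fin ne unfolding s_def by auto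
    have "S - {s} \<in> Tset (s+1) U K"
    proof -
      have "S - {s} \<subseteq> {s+1..U}"
      proof
        fix y assume y: "y \<in> S - {s}"
        then have "s < y" using s by force
        then show "y \<in> {s+1..U}" using y sub by auto
      qed
      moreover have "card (S - {s}) = K" using c s fin by simp
      ultimately show ?thesis unfolding Tset_def by simp
    qed
    moreover have "S = insert s (S - {s})" using s by auto
    moreover have "s \<in> {L..U}" using s sub by auto
    ultimately show "S \<in> (\<Union>s\<in>{L..U}. insert s ` Tset (s+1) U K)" by blast
  qed
next
  show "(\<Union>s\<in>{L..U}. insert s ` Tset (s+1) U K) \<subseteq> Tset L U (Suc K)"
  proof clarify
    fix s S' assume s: "s \<in> {L..U}" and S': "S' \<in> Tset (s+1) U K"
    then have sub: "S' \<subseteq> {s+1..U}" and c: "card S' = K" unfolding Tset_def by auto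
    have fin: "finite S'" using sub by (rule finite_subset) simp
    have "s \<notin> S'" using sub by auto
    then show "insert s S' \<in> Tset L U (Suc K)" unfolding Tset_def using s sub c fin by auto
  qed
qed

lemma sum_int_interval:
  fixes g :: "int \<Rightarrow> real"
  shows "(\<Sum>s\<in>{L..U}. g s) = (\<Sum>j<nat (U - L + 1). g (L + int j))"
proof -
  have inj: "inj_on (\<lambda>j. L + int j) {..<nat (U - L + 1)}" by (auto simp: inj_on_def)
  have img: "(\<lambda>j. L + int j) ` {..<nat (U - L + 1)} = {L..U}"
  proof
    show "(\<lambda>j. L + int j) ` {..<nat (U - L + 1)} \<subseteq> {L..U}" by auto
    show "{L..U} \<subseteq> (\<lambda>j. L + int j) ` {..<nat (U - L + 1)}"
    proof
      fix s assume "s \<in> {L..U}"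
      then have "s = L + int (nat (s - L))" "nat (s - L) < nat (U - L + 1)" by auto
      then show "s \<in> (\<lambda>j. L + int j) ` {..<nat (U - L + 1)}" by blast
    qed
  qed
  show ?thesis using sum.reindex[OF inj, of g] img by simp
qed

lemma T_bound:
  assumes x: "0 \<le> x" "x < 1"
  shows "odd h \<Longrightarrow> (\<Sum>S\<in>Tset L U K. x ^ Phi h S) \<le> Gfun x K (2 * L + h)"
proof (induction K arbitrary: L h)
  case 0
  have y: "0 \<le> x^2" "x^2 < 1" using x by (auto simp: power_less_one_iff)
  show ?case using Nco_zero[OF y] by (simp add: Tset_0 Phi_empty Gfun_def)
next
  case (Suc K)
  have "(\<Sum>S\<in>Tset L U (Suc K). x ^ Phi h S) = (\<Sum>s\<in>{L..U}. \<Sum>S\<in>insert s ` Tset (s+1) U K. x ^ Phi h S)"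
    unfolding Tset_Suc
  proof (rule sum.UNION_disjoint)
    have mem: "s \<in> T \<and> (\<forall>y\<in>T. s \<le> y)" if "T \<in> insert s ` Tset (s+1) U K" for T s
      using that unfolding Tset_def by force
    show "\<forall>s\<in>{L..U}. \<forall>t\<in>{L..U}. s \<noteq> t \<longrightarrow> insert s ` Tset (s+1) U K \<inter> insert t ` Tset (t+1) U K = {}"
    proof (intro ballI impI)
      fix s t :: int assume "s \<noteq> t"
      show "insert s ` Tset (s+1) U K \<inter> insert t ` Tset (t+1) U K = {}"
      proof (rule ccontr)
        assume "insert s ` Tset (s+1) U K \<inter> insert t ` Tset (t+1) U K \<noteq> {}"
        then obtain T where "T \<in> insert s ` Tset (s+1) U K" "T \<in> insert t ` Tset (t+1) U K" by blast
        then have "s \<le> t" "t \<le> s" using mem by blast+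
        then show False using \<open>s \<noteq> t\<close> by simp
      qed
    qed
  qed (auto intro: finite_Tset)
  also have "\<dots> = (\<Sum>s\<in>{L..U}. x ^ nat \<bar>2 * s + h\<bar> * (\<Sum>S'\<in>Tset (s+1) U K. x ^ Phi (h - 2) S'))"
  proof (rule sum.cong[OF refl])
    fix s assume s: "s \<in> {L..U}"
    have notin: "s \<notin> S'" and lt: "\<forall>t\<in>S'. s < t" if "S' \<in> Tset (s+1) U K" for S'
      using that unfolding Tset_def by auto
    have fin: "finite S'" if "S' \<in> Tset (s+1) U K" for S'
    proof -
      have "S' \<subseteq> {s+1..U}" using that unfolding Tset_def by auto
      then show ?thesis by (rule finite_subset) simp
    qed
    have inj: "inj_on (insert s) (Tset (s+1) U K)"
    proof (rule inj_onI)
      fix A B assume A: "A \<in> Tset (s+1) U K" and B: "B \<in> Tset (s+1) U K" and e: "insert s A = insert s B"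
      have "A = insert s A - {s}" using notin[OF A] by simp
      also have "\<dots> = insert s B - {s}" using e by simp
      also have "\<dots> = B" using notin[OF B] by simp
      finally show "A = B" .
    qed
    show "(\<Sum>S\<in>insert s ` Tset (s+1) U K. x ^ Phi h S) = x ^ nat \<bar>2 * s + h\<bar> * (\<Sum>S'\<in>Tset (s+1) U K. x ^ Phi (h - 2) S')"
      by (simp add: sum.reindex[OF inj] sum_distrib_left Phi_insert[OF fin notin lt] power_add)
  qed
  also have "\<dots> \<le> (\<Sum>s\<in>{L..U}. x ^ nat \<bar>2 * s + h\<bar> * Gfun x K (2 * s + h))"
  proof (rule sum_mono)
    fix s assume "s \<in> {L..U}"
    have "odd (h - 2)" using Suc.prems by simp
    then have "(\<Sum>S'\<in>Tset (s+1) U K. x ^ Phi (h - 2) S') \<le> Gfun x K (2 * (s+1) + (h - 2))"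
      by (rule Suc.IH)
    moreover have "2 * (s+1) + (h - 2) = 2 * s + h" by simp
    ultimately show "x ^ nat \<bar>2 * s + h\<bar> * (\<Sum>S'\<in>Tset (s+1) U K. x ^ Phi (h - 2) S') \<le> x ^ nat \<bar>2 * s + h\<bar> * Gfun x K (2 * s + h)"
      using x by (simp add: mult_left_mono)
  qed
  also have "\<dots> = (\<Sum>j<nat (U - L + 1). x ^ nat \<bar>(2 * L + h) + 2 * int j\<bar> * Gfun x K ((2 * L + h) + 2 * int j))"
    by (simp add: sum_int_interval algebra_simps)
  also have "\<dots> \<le> Gfun x (K+1) (2 * L + h)"
    by (rule R_odd[OF x]) (use Suc.prems in simp)
  finally show ?case by simp
qed

lemma Gfun_le:
  assumes x: "0 \<le> x" "x < 1"
  shows "Gfun x K z \<le> real (K+1) * x ^ K * (Abar (x^2))^2"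
proof -
  have y: "0 \<le> x^2" "x^2 < 1" using x by (auto simp: power_less_one_iff)
  have A: "Aco (x^2) a \<le> Abar (x^2)" for a by (rule Aco_le_Abar[OF y])
  have A0: "0 \<le> Aco (x^2) a" for a using Aco_pos[OF y] less_imp_le by blast
  have N: "Nco (x^2) a m \<le> Abar (x^2)" for a m using Nco_le_Aco[OF y] A order_trans by blast
  have N0: "0 \<le> Nco (x^2) a m" for a m by (rule Nco_nonneg[OF y])
  have B1: "1 \<le> Abar (x^2)" by (rule Abar_ge1[OF y])
  show ?thesis
  proof (cases "1 \<le> z")
    case True
    have "x ^ (K * nat z) \<le> x ^ K" using True x by (intro power_decreasing) auto
    moreover have "Aco (x^2) K \<le> real (K+1) * (Abar (x^2))^2"
    proof -
      have "Aco (x^2) K \<le> 1 * Abar (x^2)" using A by simp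
      also have "\<dots> \<le> real (K+1) * Abar (x^2) * Abar (x^2)"
      proof (rule mult_right_mono)
        have "1 * 1 \<le> real (K+1) * Abar (x^2)" using B1 by (intro mult_mono) auto
        then show "1 \<le> real (K+1) * Abar (x^2)" by simp
      qed (use B1 in auto)
      finally show ?thesis by (simp add: power2_eq_square mult.assoc)
    qed
    ultimately have "x ^ (K * nat z) * Aco (x^2) K \<le> x ^ K * (real (K+1) * (Abar (x^2))^2)"
      using A0 x by (intro mult_mono) auto
    then show ?thesis unfolding Gfun_def using True by (simp add: algebra_simps)
  next
    case False
    have "(\<Sum>a\<le>K. Nco (x^2) a (nat ((-1 - z) div 2)) * Aco (x^2) (K - a)) \<le> (\<Sum>a\<le>K. Abar (x^2) * Abar (x^2))"
      using A A0 N N0 B1 by (intro sum_mono mult_mono) auto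
    also have "\<dots> = real (K+1) * (Abar (x^2))^2" by (simp add: power2_eq_square)
    finally have "x ^ K * (\<Sum>a\<le>K. Nco (x^2) a (nat ((-1 - z) div 2)) * Aco (x^2) (K - a)) \<le> x ^ K * (real (K+1) * (Abar (x^2))^2)"
      using x by (intro mult_left_mono) auto
    then show ?thesis unfolding Gfun_def using False by (simp add: algebra_simps)
  qed
qed


lemma sum_pow_le: "0 \<le> (q::real) \<Longrightarrow> q < 1 \<Longrightarrow> (\<Sum>j<n. q^j) \<le> 1 / (1 - q)"
  by (simp add: sum_gp_strict divide_right_mono)

lemma sum_pow_ge1: "0 \<le> (q::real) \<Longrightarrow> 1 \<le> (\<Sum>j<Suc n. q^j)"
proof -
  assume q: "0 \<le> q"
  have "(\<Sum>j<Suc n. q^j) = 1 + (\<Sum>j<n. q^(Suc j))" by (subst sum.lessThan_Suc_shift) simp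
  moreover have "0 \<le> (\<Sum>j<n. q^(Suc j))" using q by (intro sum_nonneg) auto
  ultimately show ?thesis by simp
qed

lemma Zq_pos: "0 \<le> q \<Longrightarrow> 0 < Zq q n"
proof (induction n)
  case (Suc n) then show ?case using sum_pow_ge1[of q n] by simp
qed simp

lemma Zq_upper:
  assumes "0 \<le> q" "q < 1"
  shows "Zq q n \<le> (1 / (1 - q)) ^ n"
proof (induction n)
  case (Suc n)
  have "Zq q (Suc n) = Zq q n * (\<Sum>j<Suc n. q^j)" by simp
  also have "\<dots> \<le> (1 / (1 - q)) ^ n * (1 / (1 - q))"
    using Suc sum_pow_le[OF assms, of "Suc n"] Zq_pos[OF assms(1), of n] sum_pow_ge1[OF assms(1), of n]
    by (intro mult_mono) auto
  finally show ?case by (simp add: power_Suc2)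
qed simp

lemma Zq_Aco:
  assumes "0 \<le> q" "q < 1"
  shows "Zq q n * (1 - q) ^ n * Aco q n = 1"
proof (induction n)
  case (Suc n)
  have d: "1 - q ^ Suc n \<noteq> 0" using pow_lt1[OF assms, of "Suc n"] by simp
  have g: "(\<Sum>j<Suc n. q^j) * (1 - q) = 1 - q ^ Suc n"
  proof -
    have "(\<Sum>j<Suc n. q^j) = (1 - q ^ Suc n) / (1 - q)" using assms by (subst sum_gp_strict) auto
    then show ?thesis using assms by simp
  qed
  have "Zq q (Suc n) * (1 - q) ^ Suc n * Aco q (Suc n) =
        (Zq q n * (1 - q) ^ n * Aco q n) * ((\<Sum>j<Suc n. q^j) * (1 - q)) / (1 - q ^ Suc n)"
    by (simp add: field_simps)
  also have "\<dots> = 1" using Suc g d by simp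
  finally show ?case .
qed simp

lemma Zq_lower:
  assumes "0 \<le> q" "q < 1"
  shows "(1 / (1 - q)) ^ n / Abar q \<le> Zq q n"
proof -
  have A: "0 < Aco q n" "Aco q n \<le> Abar q" using Aco_pos[OF assms] Aco_le_Abar[OF assms] by auto
  have p: "0 < (1 - q) ^ n" using assms by simp
  have "Zq q n = 1 / ((1 - q) ^ n * Aco q n)"
  proof -
    have "(1 - q) ^ n * Aco q n \<noteq> 0" using A p by (metis less_irrefl mult_pos_pos)
    moreover have "Zq q n * ((1 - q) ^ n * Aco q n) = 1" using Zq_Aco[OF assms, of n] by (simp add: mult.assoc)
    ultimately show ?thesis by (simp add: eq_divide_eq)
  qed
  also have "\<dots> = (1 / (1 - q)) ^ n / Aco q n" by (simp add: power_one_over)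
  finally have "Zq q n = (1 / (1 - q)) ^ n / Aco q n" .
  moreover have "(1 / (1 - q)) ^ n / Abar q \<le> (1 / (1 - q)) ^ n / Aco q n"
    using A assms by (intro divide_left_mono) auto
  ultimately show ?thesis by simp
qed


definition glue :: "int \<Rightarrow> int \<Rightarrow> int \<Rightarrow> (int \<Rightarrow> int) \<Rightarrow> (int \<Rightarrow> int) \<Rightarrow> int \<Rightarrow> int" where
  "glue a b d \<alpha> \<beta> = (\<lambda>i. if i \<in> {a..b} then d - i else \<alpha> (\<beta> i))"

context
  fixes n a b d :: int
  assumes ab: "a + b = d" and an: "-n \<le> a" and bn: "b \<le> n" and ab1: "a \<le> b + 1"
begin

lemma glue_props:
  assumes al: "\<alpha> \<in> perms_of {-n..a-1}" and be: "\<beta> \<in> perms_of {b+1..n}"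
  shows "glue a b d \<alpha> \<beta> \<in> perms_of {-n..n}"
    and "\<forall>i\<in>{a..b}. glue a b d \<alpha> \<beta> i = d - i"
    and "inversions (glue a b d \<alpha> \<beta>) {-n..n} \<le> inversions \<alpha> {-n..a-1} + inversions \<beta> {b+1..n} + (card {a..b} choose 2)"
proof -
  let ?g = "glue a b d \<alpha> \<beta>"
  let ?L = "{-n..a-1}" and ?B = "{a..b}" and ?R = "{b+1..n}"
  have bA: "bij_betw \<alpha> ?L ?L" and iA: "\<forall>x. x \<notin> ?L \<longrightarrow> \<alpha> x = x" using al unfolding perms_of_def by auto
  have bB: "bij_betw \<beta> ?R ?R" and iB: "\<forall>x. x \<notin> ?R \<longrightarrow> \<beta> x = x" using be unfolding perms_of_def by auto
  have aL: "\<alpha> x \<in> ?L" if "x \<in> ?L" for x using bA that unfolding bij_betw_def by auto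
  have bR: "\<beta> x \<in> ?R" if "x \<in> ?R" for x using bB that unfolding bij_betw_def by auto
  have gL: "?g x = \<alpha> x" if "x \<in> ?L" for x
  proof -
    have "x \<notin> ?R" "x \<notin> ?B" using that ab1 by auto
    then show ?thesis using iB unfolding glue_def by auto
  qed
  have gR: "?g x = \<beta> x" if "x \<in> ?R" for x
  proof -
    have "x \<notin> ?B" using that by auto
    moreover have "\<beta> x \<notin> ?L" using bR[OF that] ab1 by auto
    ultimately show ?thesis using iA unfolding glue_def by auto
  qed
  have gB: "?g x = d - x" if "x \<in> ?B" for x using that unfolding glue_def by auto
  have gO: "?g x = x" if "x \<notin> {-n..n}" for x
  proof -
    have nL: "x \<notin> ?L" and nR: "x \<notin> ?R" and nB: "x \<notin> ?B" using that an bn ab1 by auto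
    have "\<beta> x = x" using iB nR by blast
    moreover have "\<alpha> x = x" using iA nL by blast
    ultimately show ?thesis unfolding glue_def if_not_P[OF nB] by simp
  qed
  have gLL: "?g x \<in> ?L" if "x \<in> ?L" for x using gL aL that by simp
  have gRR: "?g x \<in> ?R" if "x \<in> ?R" for x using gR bR that by simp
  have gBB: "?g x \<in> ?B" if "x \<in> ?B" for x using gB that ab by auto
  have b1: "bij_betw ?g ?L ?L" using bA by (rule bij_betw_cong[THEN iffD1, rotated]) (simp add: gL)
  have b2: "bij_betw ?g ?R ?R" using bB by (rule bij_betw_cong[THEN iffD1, rotated]) (simp add: gR)
  have b3: "bij_betw ?g ?B ?B"
  proof -
    have "bij_betw (\<lambda>x. d - x) ?B ?B"
      unfolding bij_betw_def
    proof
      show "inj_on (\<lambda>x. d - x) ?B" by (auto simp: inj_on_def)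
      show "(\<lambda>x. d - x) ` ?B = ?B"
      proof
        show "(\<lambda>x. d - x) ` ?B \<subseteq> ?B" using ab by auto
        show "?B \<subseteq> (\<lambda>x. d - x) ` ?B"
        proof
          fix y assume "y \<in> ?B"
          then have "d - y \<in> ?B" "y = d - (d - y)" using ab by auto
          then show "y \<in> (\<lambda>x. d - x) ` ?B" by blast
        qed
      qed
    qed
    then show ?thesis by (rule bij_betw_cong[THEN iffD1, rotated]) (simp add: gB)
  qed
  have I: "{-n..n} = ?L \<union> ?B \<union> ?R" using an bn ab1 by auto
  have "bij_betw ?g (?L \<union> ?B \<union> ?R) (?L \<union> ?B \<union> ?R)"
    by (intro bij_betw_combine b1 b2 b3) (use ab1 in auto)
  then have "bij_betw ?g {-n..n} {-n..n}" using I by simp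
  then show "?g \<in> perms_of {-n..n}" unfolding perms_of_def using gO by auto
  show "\<forall>i\<in>{a..b}. ?g i = d - i" using gB by auto
  let ?I1 = "{(i, j). i \<in> ?L \<and> j \<in> ?L \<and> i < j \<and> \<alpha> j < \<alpha> i}"
  let ?I2 = "{(i, j). i \<in> ?R \<and> j \<in> ?R \<and> i < j \<and> \<beta> j < \<beta> i}"
  let ?I3 = "{(i, j). i \<in> ?B \<and> j \<in> ?B \<and> i < j}"
  have sub: "{(i, j). i \<in> {-n..n} \<and> j \<in> {-n..n} \<and> i < j \<and> ?g j < ?g i} \<subseteq> ?I1 \<union> ?I2 \<union> ?I3"
  proof
    fix p assume "p \<in> {(i, j). i \<in> {-n..n} \<and> j \<in> {-n..n} \<and> i < j \<and> ?g j < ?g i}"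
    then obtain i j where p: "p = (i, j)" and i: "i \<in> {-n..n}" and j: "j \<in> {-n..n}" and ij: "i < j" and inv: "?g j < ?g i"
      by blast
    have iL: "i \<in> ?L \<or> i \<in> ?B \<or> i \<in> ?R" and jL: "j \<in> ?L \<or> j \<in> ?B \<or> j \<in> ?R" using i j I by auto
    define X where "X \<longleftrightarrow> (i, j) \<in> ?I1 \<union> ?I2 \<union> ?I3"
    have X
    proof -
      { assume a1: "i \<in> ?L" "j \<in> ?L"
        then have "(i, j) \<in> ?I1" using ij inv gL[OF a1(1)] gL[OF a1(2)] by simp
        then have X unfolding X_def by blast }
      moreover { assume a1: "i \<in> ?R" "j \<in> ?R"
        then have "(i, j) \<in> ?I2" using ij inv gR[OF a1(1)] gR[OF a1(2)] by simp
        then have X unfolding X_def by blast }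
      moreover { assume a1: "i \<in> ?B" "j \<in> ?B"
        then have "(i, j) \<in> ?I3" using ij by simp
        then have X unfolding X_def by blast }
      moreover { assume a1: "i \<in> ?L" "j \<in> ?B"
        have "?g i < a" "a \<le> ?g j" using gLL[OF a1(1)] gBB[OF a1(2)] by auto
        then have False using inv by simp }
      moreover { assume a1: "i \<in> ?L" "j \<in> ?R"
        have "?g i < a" "b + 1 \<le> ?g j" using gLL[OF a1(1)] gRR[OF a1(2)] by auto
        then have False using inv ab1 by simp }
      moreover { assume a1: "i \<in> ?B" "j \<in> ?R"
        have "?g i \<le> b" "b + 1 \<le> ?g j" using gBB[OF a1(1)] gRR[OF a1(2)] by auto
        then have False using inv by simp }
      moreover { assume a1: "i \<in> ?B" "j \<in> ?L"
        then have False using ij by simp }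
      moreover { assume a1: "i \<in> ?R" "j \<in> ?L"
        then have False using ij ab1 by simp }
      moreover { assume a1: "i \<in> ?R" "j \<in> ?B"
        then have False using ij by simp }
      ultimately show X using iL jL by blast
    qed
    then show "p \<in> ?I1 \<union> ?I2 \<union> ?I3" using p unfolding X_def by simp
  qed
  have f1: "finite ?I1" by (rule finite_subset[of _ "?L \<times> ?L"]) auto
  have f2: "finite ?I2" by (rule finite_subset[of _ "?R \<times> ?R"]) auto
  have f3: "finite ?I3" by (rule finite_subset[of _ "?B \<times> ?B"]) auto
  have "inversions ?g {-n..n} \<le> card (?I1 \<union> ?I2 \<union> ?I3)"
    unfolding inversions_def by (rule card_mono) (use f1 f2 f3 sub in blast)+
  also have "\<dots> \<le> card ?I1 + card ?I2 + card ?I3"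
  proof -
    have "card (?I1 \<union> ?I2 \<union> ?I3) \<le> card (?I1 \<union> ?I2) + card ?I3" by (rule card_Un_le)
    moreover have "card (?I1 \<union> ?I2) \<le> card ?I1 + card ?I2" by (rule card_Un_le)
    ultimately show ?thesis by linarith
  qed
  also have "card ?I3 = card ?B choose 2" by (rule card_pairs_less) simp
  finally show "inversions ?g {-n..n} \<le> inversions \<alpha> ?L + inversions \<beta> ?R + (card ?B choose 2)"
    unfolding inversions_def by simp
qed

lemma glue_L:
  assumes al: "\<alpha> \<in> perms_of {-n..a-1}" and be: "\<beta> \<in> perms_of {b+1..n}" and x: "x \<in> {-n..a-1}"
  shows "glue a b d \<alpha> \<beta> x = \<alpha> x"
proof -
  have iB: "\<forall>x. x \<notin> {b+1..n} \<longrightarrow> \<beta> x = x" using be unfolding perms_of_def by auto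
  have "x \<notin> {b+1..n}" "x \<notin> {a..b}" using x ab1 by auto
  then show ?thesis using iB unfolding glue_def by auto
qed

lemma glue_R:
  assumes al: "\<alpha> \<in> perms_of {-n..a-1}" and be: "\<beta> \<in> perms_of {b+1..n}" and x: "x \<in> {b+1..n}"
  shows "glue a b d \<alpha> \<beta> x = \<beta> x"
proof -
  have iA: "\<forall>x. x \<notin> {-n..a-1} \<longrightarrow> \<alpha> x = x" using al unfolding perms_of_def by auto
  have bB: "bij_betw \<beta> {b+1..n} {b+1..n}" using be unfolding perms_of_def by auto
  have "\<beta> x \<in> {b+1..n}" using bB x unfolding bij_betw_def by auto
  then have "\<beta> x \<notin> {-n..a-1}" using ab1 by auto
  moreover have "x \<notin> {a..b}" using x by auto
  ultimately show ?thesis using iA unfolding glue_def by auto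
qed

lemma glue_inj: "inj_on (\<lambda>(\<alpha>, \<beta>). glue a b d \<alpha> \<beta>) (perms_of {-n..a-1} \<times> perms_of {b+1..n})"
proof (rule inj_onI, clarify)
  fix \<alpha> \<beta> \<alpha>' \<beta>'
  assume al: "\<alpha> \<in> perms_of {-n..a-1}" and be: "\<beta> \<in> perms_of {b+1..n}"
    and al': "\<alpha>' \<in> perms_of {-n..a-1}" and be': "\<beta>' \<in> perms_of {b+1..n}"
    and e: "glue a b d \<alpha> \<beta> = glue a b d \<alpha>' \<beta>'"
  have iA: "\<forall>x. x \<notin> {-n..a-1} \<longrightarrow> \<alpha> x = x" "\<forall>x. x \<notin> {-n..a-1} \<longrightarrow> \<alpha>' x = x"
    using al al' unfolding perms_of_def by auto
  have iB: "\<forall>x. x \<notin> {b+1..n} \<longrightarrow> \<beta> x = x" "\<forall>x. x \<notin> {b+1..n} \<longrightarrow> \<beta>' x = x"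
    using be be' unfolding perms_of_def by auto
  have "\<alpha> = \<alpha>'"
  proof
    fix x show "\<alpha> x = \<alpha>' x"
    proof (cases "x \<in> {-n..a-1}")
      case True
      then show ?thesis using glue_L[OF al be True] glue_L[OF al' be' True] e by simp
    next
      case False then show ?thesis using iA by simp
    qed
  qed
  moreover have "\<beta> = \<beta>'"
  proof
    fix x show "\<beta> x = \<beta>' x"
    proof (cases "x \<in> {b+1..n}")
      case True
      then show ?thesis using glue_R[OF al be True] glue_R[OF al' be' True] e by simp
    next
      case False then show ?thesis using iB by simp
    qed
  qed
  ultimately show "\<alpha> = \<alpha>' \<and> \<beta> = \<beta>'" by simp
qed

lemma glue_sum_lower:
  fixes q :: real
  assumes q: "0 \<le> q" "q \<le> 1"
  shows "q ^ (card {a..b} choose 2) * Zq q (card {-n..a-1}) * Zq q (card {b+1..n})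
    \<le> (\<Sum>\<pi>\<in>{\<pi>\<in>perms_of {-n..n}. \<forall>i\<in>{a..b}. \<pi> i = d - i}. q ^ inversions \<pi> {-n..n})"
proof -
  let ?PL = "perms_of {-n..a-1}" and ?PR = "perms_of {b+1..n}"
  let ?F = "{\<pi>\<in>perms_of {-n..n}. \<forall>i\<in>{a..b}. \<pi> i = d - i}"
  let ?C = "card {a..b} choose 2"
  have finL: "finite ?PL" and finR: "finite ?PR"
    unfolding perms_of_eq by (auto intro: finite_perms2)
  have "q ^ ?C * Zq q (card {-n..a-1}) * Zq q (card {b+1..n})
      = q ^ ?C * (\<Sum>\<alpha>\<in>?PL. q ^ inversions \<alpha> {-n..a-1}) * (\<Sum>\<beta>\<in>?PR. q ^ inversions \<beta> {b+1..n})"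
    unfolding perms_of_eq by (simp add: W_formula)
  also have "\<dots> = (\<Sum>(\<alpha>, \<beta>)\<in>?PL \<times> ?PR. q ^ (inversions \<alpha> {-n..a-1} + inversions \<beta> {b+1..n} + ?C))"
    by (simp add: sum_product sum.cartesian_product power_add sum_distrib_left algebra_simps)
  also have "\<dots> \<le> (\<Sum>(\<alpha>, \<beta>)\<in>?PL \<times> ?PR. q ^ inversions (glue a b d \<alpha> \<beta>) {-n..n})"
  proof (rule sum_mono, clarify)
    fix \<alpha> \<beta> assume al: "\<alpha> \<in> ?PL" and be: "\<beta> \<in> ?PR"
    show "q ^ (inversions \<alpha> {-n..a-1} + inversions \<beta> {b+1..n} + ?C) \<le> q ^ inversions (glue a b d \<alpha> \<beta>) {-n..n}"
      using glue_props(3)[OF al be] q by (intro power_decreasing) auto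
  qed
  also have "\<dots> = (\<Sum>\<pi>\<in>(\<lambda>(\<alpha>, \<beta>). glue a b d \<alpha> \<beta>) ` (?PL \<times> ?PR). q ^ inversions \<pi> {-n..n})"
    by (subst sum.reindex[OF glue_inj]) (simp add: case_prod_unfold)
  also have "\<dots> \<le> (\<Sum>\<pi>\<in>?F. q ^ inversions \<pi> {-n..n})"
  proof (rule sum_mono2)
    have "finite (perms_of {-n..n})" unfolding perms_of_eq by (auto intro: finite_perms2)
    then show "finite ?F" by simp
    show "(\<lambda>(\<alpha>, \<beta>). glue a b d \<alpha> \<beta>) ` (?PL \<times> ?PR) \<subseteq> ?F"
      using glue_props(1,2) by auto
  qed (use q in auto)
  finally show ?thesis .
qed

end


locale mal = prob_space M for M :: "'a measure" +
  fixes \<Sigma> :: "'a \<Rightarrow> int \<Rightarrow> int" and q :: real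
  assumes q0: "0 < q" and q1: "q < 1" and malZ: "mallows_Z M q \<Sigma>"
begin

definition I :: "nat \<Rightarrow> int set" where "I n = {- int n..int n}"

definition ev :: "nat \<Rightarrow> (int \<Rightarrow> int) \<Rightarrow> 'a set" where
  "ev n \<pi> = {\<omega> \<in> space M. pattern (\<Sigma> \<omega>) (I n) = \<pi>}"

definition EvF :: "nat \<Rightarrow> (int \<Rightarrow> int) set \<Rightarrow> 'a set" where
  "EvF n F = (\<Union>\<pi>\<in>F. ev n \<pi>)"

lemma finite_perms_of: "finite A \<Longrightarrow> finite (perms_of A)"
  unfolding perms_of_eq by (rule finite_perms2)

lemma mallows_prob_eq:
  "\<pi> \<in> perms_of (I n) \<Longrightarrow> mallows_prob (I n) q \<pi> = q ^ inversions \<pi> (I n) / Zq q (card (I n))"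
  unfolding mallows_prob_def perms_of_eq I_def by (simp add: W_formula)

lemma ev_measure: "\<pi> \<in> perms_of (I n) \<Longrightarrow> measure M (ev n \<pi>) = q ^ inversions \<pi> (I n) / Zq q (card (I n))"
  using malZ unfolding mallows_Z_def ev_def I_def by (simp add: mallows_prob_eq[unfolded I_def])

lemma ev_sets: "\<pi> \<in> perms_of (I n) \<Longrightarrow> ev n \<pi> \<in> sets M"
proof (rule ccontr)
  assume p: "\<pi> \<in> perms_of (I n)" and ns: "ev n \<pi> \<notin> sets M"
  have "measure M (ev n \<pi>) = 0" using ns by (simp add: measure_notin_sets)
  moreover have "0 < q ^ inversions \<pi> (I n) / Zq q (card (I n))"
    using q0 Zq_pos[of q] by simp
  ultimately show False using ev_measure[OF p] by linarith
qed

lemma EvF_sets: "F \<subseteq> perms_of (I n) \<Longrightarrow> EvF n F \<in> sets M"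
  unfolding EvF_def
proof (rule sets.finite_UN)
  assume "F \<subseteq> perms_of (I n)"
  then show "finite F" using finite_perms_of[of "I n"] finite_subset unfolding I_def by auto
qed (use ev_sets in auto)

lemma EvF_measure:
  assumes F: "F \<subseteq> perms_of (I n)"
  shows "measure M (EvF n F) = (\<Sum>\<pi>\<in>F. q ^ inversions \<pi> (I n)) / Zq q (card (I n))"
proof -
  have finF: "finite F" using F finite_perms_of[of "I n"] finite_subset unfolding I_def by auto
  have "measure M (EvF n F) = (\<Sum>\<pi>\<in>F. measure M (ev n \<pi>))"
    unfolding EvF_def
  proof (rule finite_measure_finite_Union[OF finF])
    show "ev n ` F \<subseteq> sets M" using ev_sets F by auto
    show "disjoint_family_on (ev n) F" unfolding disjoint_family_on_def ev_def by auto
  qed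
  also have "\<dots> = (\<Sum>\<pi>\<in>F. q ^ inversions \<pi> (I n) / Zq q (card (I n)))"
    using F ev_measure by (intro sum.cong) auto
  finally show ?thesis by (simp add: sum_divide_distrib)
qed

lemma AE_perm: "AE \<omega> in M. \<forall>n. pattern (\<Sigma> \<omega>) (I n) \<in> perms_of (I n)"
proof (subst AE_all_countable, intro allI)
  fix n
  have "measure M (EvF n (perms_of (I n))) = 1"
  proof -
    have "(\<Sum>\<pi>\<in>perms_of (I n). q ^ inversions \<pi> (I n)) = Zq q (card (I n))"
      unfolding perms_of_eq I_def by (simp add: W_formula)
    then show ?thesis using EvF_measure[of "perms_of (I n)" n] Zq_pos[of q "card (I n)"] q0 by simp
  qed
  then have "AE \<omega> in M. \<omega> \<in> EvF n (perms_of (I n))" by (rule AE_prob_1)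
  then show "AE \<omega> in M. pattern (\<Sigma> \<omega>) (I n) \<in> perms_of (I n)"
    by (rule AE_mp) (auto simp: EvF_def ev_def)
qed

lemma AE_lim: "AE \<omega> in M. \<forall>i. \<exists>N. \<forall>n\<ge>N. pattern (\<Sigma> \<omega>) (I n) i = \<Sigma> \<omega> i"
  using malZ unfolding mallows_Z_def I_def by simp

lemma meas_coord: "{\<omega> \<in> space M. \<Sigma> \<omega> i = v} \<in> sets M"
proof -
  have "(\<lambda>\<omega>. \<Sigma> \<omega> i) \<in> measurable M (count_space UNIV)" using malZ unfolding mallows_Z_def by simp
  then have "(\<lambda>\<omega>. \<Sigma> \<omega> i) -` {v} \<inter> space M \<in> sets M" by (rule measurable_sets) auto
  moreover have "(\<lambda>\<omega>. \<Sigma> \<omega> i) -` {v} \<inter> space M = {\<omega> \<in> space M. \<Sigma> \<omega> i = v}" by auto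
  ultimately show ?thesis by simp
qed

end


lemma C1_ge_iff: "enat K \<le> C1 g \<longleftrightarrow> (\<exists>S. finite S \<and> card S = K \<and> (\<forall>s\<in>S. g s = s))"
proof
  assume h: "enat K \<le> C1 g"
  show "\<exists>S. finite S \<and> card S = K \<and> (\<forall>s\<in>S. g s = s)"
  proof (cases "finite {i. g i = i}")
    case True
    then have "K \<le> card {i. g i = i}" using h unfolding C1_def by simp
    then obtain S where "S \<subseteq> {i. g i = i}" "card S = K" by (meson obtain_subset_with_card_n)
    then show ?thesis using True finite_subset by blast
  next
    case False
    then obtain S where "S \<subseteq> {i. g i = i}" "finite S" "card S = K" by (meson infinite_arbitrarily_large)
    then show ?thesis by blast
  qed
next
  assume "\<exists>S. finite S \<and> card S = K \<and> (\<forall>s\<in>S. g s = s)"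
  then obtain S where S: "finite S" "card S = K" "S \<subseteq> {i. g i = i}" by auto
  show "enat K \<le> C1 g"
  proof (cases "finite {i. g i = i}")
    case True
    then have "card S \<le> card {i. g i = i}" using S card_mono by blast
    then show ?thesis using True S unfolding C1_def by simp
  next
    case False then show ?thesis unfolding C1_def by simp
  qed
qed

context mal
begin

definition ES :: "int \<Rightarrow> int set \<Rightarrow> 'a set" where
  "ES d S = {\<omega> \<in> space M. \<forall>s\<in>S. \<Sigma> \<omega> s = d - s}"

lemma ES_sets: "finite S \<Longrightarrow> ES d S \<in> sets M"
  unfolding ES_def by (rule sets.sets_Collect_finite_All) (use meas_coord in auto)

lemma event_eq:
  assumes f: "\<And>x. f x = d - x"
  shows "{\<omega> \<in> space M. enat K \<le> C1 (f \<circ> \<Sigma> \<omega>)} = (\<Union>S\<in>{S. finite S \<and> card S = K}. ES d S)"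
proof -
  have "(f \<circ> \<Sigma> \<omega>) s = s \<longleftrightarrow> \<Sigma> \<omega> s = d - s" for \<omega> s using f by auto
  then show ?thesis unfolding ES_def C1_ge_iff by auto
qed

lemma event_sets:
  assumes f: "\<And>x. f x = d - x"
  shows "{\<omega> \<in> space M. enat K \<le> C1 (f \<circ> \<Sigma> \<omega>)} \<in> sets M"
  unfolding event_eq[OF f]
proof (rule sets.countable_UN'')
  show "countable {S :: int set. finite S \<and> card S = K}"
    by (rule countable_subset[OF _ countable_Collect_finite_subset[of "UNIV :: int set"]]) auto
qed (auto intro: ES_sets)

end


context mal
begin

lemma ratio_lower:
  fixes cL cR K :: nat
  shows "q ^ C * Zq q cL * Zq q cR / Zq q (cL + K + cR) \<ge> q ^ C * (1 - q) ^ K / (Abar q)^2"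
proof -
  have qq: "0 \<le> q" "q < 1" using q0 q1 by auto
  let ?t = "1 / (1 - q)"
  have t: "0 < ?t" using q1 by simp
  have Ab: "0 < Abar q" using Abar_ge1[OF qq] by simp
  have z1: "?t ^ cL / Abar q \<le> Zq q cL" "?t ^ cR / Abar q \<le> Zq q cR" using Zq_lower[OF qq] by auto
  have z2: "Zq q (cL + K + cR) \<le> ?t ^ (cL + K + cR)" using Zq_upper[OF qq] by auto
  have zp: "0 < Zq q (cL + K + cR)" using Zq_pos qq by auto
  have "q ^ C * (1 - q) ^ K / (Abar q)^2 = q ^ C * (?t ^ cL / Abar q) * (?t ^ cR / Abar q) / ?t ^ (cL + K + cR)"
    using q1 Ab by (simp add: power_add field_simps power2_eq_square)
  also have "\<dots> \<le> q ^ C * Zq q cL * Zq q cR / ?t ^ (cL + K + cR)"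
    using z1 t q0 Ab Zq_pos[of q cL] by (intro divide_right_mono mult_mono) auto
  also have "\<dots> \<le> q ^ C * Zq q cL * Zq q cR / Zq q (cL + K + cR)"
    using z2 zp q0 Zq_pos[of q cL] Zq_pos[of q cR] t by (intro divide_left_mono mult_nonneg_nonneg mult_pos_pos) auto
  finally show ?thesis .
qed

lemma lower_bound:
  fixes d :: int and K :: nat
  assumes f: "\<And>x. f x = d - x" and odd: "odd (int K - d)"
  shows "q ^ (K choose 2) * (1 - q) ^ K / (Abar q)^2 \<le> measure M {\<omega> \<in> space M. enat K \<le> C1 (f \<circ> \<Sigma> \<omega>)}"
proof -
  define a where "a = (d - int K + 1) div 2"
  define b where "b = a + int K - 1"
  obtain c where c: "int K - d = 2 * c + 1" using oddE[OF odd] by blast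
  have "d - int K + 1 = 2 * (- c)" using c by simp
  then have "a = - c" unfolding a_def by simp
  then have ab: "a + b = d" unfolding b_def using c by simp
  have ab1: "a \<le> b + 1" unfolding b_def by simp
  have cB: "card {a..b} = K" unfolding b_def by simp
  let ?c = "q ^ (K choose 2) * (1 - q) ^ K / (Abar q)^2"
  define F where "F n = {\<pi>\<in>perms_of (I n). \<forall>i\<in>{a..b}. \<pi> i = d - i}" for n
  define N0 where "N0 = nat (\<bar>a\<bar> + \<bar>b\<bar>)"
  have Fsub: "F n \<subseteq> perms_of (I n)" for n unfolding F_def by auto
  have Fm: "?c \<le> measure M (EvF n (F n))" if n: "N0 \<le> n" for n
  proof -
    have an: "- int n \<le> a" and bn: "b \<le> int n" using n unfolding N0_def by auto
    have card: "card (I n) = card {- int n..a-1} + K + card {b+1..int n}"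
      unfolding I_def using an bn ab1 unfolding b_def by simp
    have "measure M (EvF n (F n)) = (\<Sum>\<pi>\<in>F n. q ^ inversions \<pi> (I n)) / Zq q (card (I n))"
      by (rule EvF_measure[OF Fsub])
    also have "\<dots> \<ge> q ^ (card {a..b} choose 2) * Zq q (card {- int n..a-1}) * Zq q (card {b+1..int n}) / Zq q (card (I n))"
      unfolding F_def I_def
      by (intro divide_right_mono glue_sum_lower[OF ab an bn ab1]) (use q0 q1 Zq_pos[of q] in \<open>auto intro: less_imp_le\<close>)
    finally have "q ^ (K choose 2) * Zq q (card {- int n..a-1}) * Zq q (card {b+1..int n}) / Zq q (card {- int n..a-1} + K + card {b+1..int n}) \<le> measure M (EvF n (F n))"
      using cB card by simp
    moreover have "?c \<le> q ^ (K choose 2) * Zq q (card {- int n..a-1}) * Zq q (card {b+1..int n}) / Zq q (card {- int n..a-1} + K + card {b+1..int n})"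
      by (rule ratio_lower)
    ultimately show ?thesis by linarith
  qed
  define U where "U N = (\<Union>n\<in>{N..}. EvF n (F n))" for N
  have Us: "U N \<in> sets M" for N
    unfolding U_def by (rule sets.countable_UN'') (auto intro: EvF_sets[OF Fsub])
  have Ud: "antimono_on UNIV U" unfolding monotone_on_def U_def by (auto intro: order_trans)
  have lim: "(\<lambda>N. measure M (U N)) \<longlonglongrightarrow> measure M (\<Inter> (range U))"
    by (rule finite_Lim_measure_decseq) (use Us Ud in auto)
  have "?c \<le> measure M (U N)" for N
  proof -
    have "?c \<le> measure M (EvF (max N N0) (F (max N N0)))" by (rule Fm) simp
    also have "\<dots> \<le> measure M (U N)"
    proof (rule finite_measure_mono[OF _ Us])
      show "EvF (max N N0) (F (max N N0)) \<subseteq> U N" unfolding U_def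
        by (rule UN_upper) simp
    qed
    finally show ?thesis .
  qed
  then have c_LS: "?c \<le> measure M (\<Inter> (range U))" using LIMSEQ_le_const[OF lim] by auto
  have AE: "AE \<omega>\<in>(\<Inter> (range U)) in M. \<omega> \<in> ES d {a..b}"
    using AE_lim
  proof (rule AE_mp, intro AE_I2 impI)
    fix \<omega> assume \<omega>: "\<omega> \<in> space M" and lim: "\<forall>i. \<exists>N. \<forall>n\<ge>N. pattern (\<Sigma> \<omega>) (I n) i = \<Sigma> \<omega> i"
      and LS: "\<omega> \<in> \<Inter> (range U)"
    obtain Nf where Nf: "\<And>i n. Nf i \<le> n \<Longrightarrow> pattern (\<Sigma> \<omega>) (I n) i = \<Sigma> \<omega> i"
      using lim by metis
    define N where "N = Max (insert 0 (Nf ` {a..b}))"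
    have NN: "Nf i \<le> N" if "i \<in> {a..b}" for i unfolding N_def using that by (intro Max_ge) auto
    have "\<omega> \<in> U N" using LS by auto
    then obtain n \<pi> where n: "N \<le> n" and \<pi>: "\<pi> \<in> F n" and pat: "pattern (\<Sigma> \<omega>) (I n) = \<pi>"
      unfolding U_def EvF_def ev_def by auto
    have "\<Sigma> \<omega> i = d - i" if i: "i \<in> {a..b}" for i
    proof -
      have "\<Sigma> \<omega> i = pattern (\<Sigma> \<omega>) (I n) i" using Nf[of i n] NN[OF i] n by simp
      also have "\<dots> = d - i" using pat \<pi> i unfolding F_def by auto
      finally show ?thesis .
    qed
    then show "\<omega> \<in> ES d {a..b}" unfolding ES_def using \<omega> by auto
  qed
  have "measure M (\<Inter> (range U)) \<le> measure M (ES d {a..b})"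
    by (rule finite_measure_mono_AE[OF AE ES_sets]) simp
  also have "\<dots> \<le> measure M {\<omega> \<in> space M. enat K \<le> C1 (f \<circ> \<Sigma> \<omega>)}"
  proof (rule finite_measure_mono[OF _ event_sets[OF f]])
    show "ES d {a..b} \<subseteq> {\<omega> \<in> space M. enat K \<le> C1 (f \<circ> \<Sigma> \<omega>)}"
      unfolding event_eq[OF f] using cB by auto
  qed
  finally show ?thesis using c_LS by simp
qed

end


context mal
begin

lemma ratio_upper:
  fixes N K :: nat
  assumes "K \<le> N"
  shows "Zq q (N - K) / Zq q N \<le> (1 - q) ^ K * Abar q"
proof -
  have qq: "0 \<le> q" "q < 1" using q0 q1 by auto
  let ?t = "1 / (1 - q)"
  have t: "0 < ?t" using q1 by simp
  have Ab: "0 < Abar q" using Abar_ge1[OF qq] by simp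
  have z1: "Zq q (N - K) \<le> ?t ^ (N - K)" using Zq_upper[OF qq] by auto
  have z2: "?t ^ N / Abar q \<le> Zq q N" using Zq_lower[OF qq] by auto
  have zp: "0 < Zq q N" "0 < Zq q (N - K)" using Zq_pos qq by auto
  have "Zq q (N - K) / Zq q N \<le> ?t ^ (N - K) / (?t ^ N / Abar q)"
    using z1 z2 zp t Ab by (intro frac_le) auto
  also have "\<dots> = (1 - q) ^ K * Abar q"
  proof -
    have "?t ^ N = ?t ^ (N - K) * ?t ^ K" using assms by (simp add: power_add[symmetric])
    then show ?thesis using q1 Ab by (simp add: field_simps power_one_over)
  qed
  finally show ?thesis .
qed

lemma Y_bound:
  fixes d :: int and K m n :: nat
  assumes hodd: "odd (int K - 1 - d)" and n: "int m + \<bar>d\<bar> \<le> int n"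
  shows "measure M (EvF n {\<pi>\<in>perms_of (I n). \<exists>S\<in>Tset (- int m) (int m) K. \<forall>s\<in>S. \<pi> s = d - s})
    \<le> q ^ (K choose 2) * (1 - q) ^ K * Abar q * (real (K+1) * q ^ K * (Abar (q^2))^2)"
proof -
  let ?T = "Tset (- int m) (int m) K"
  let ?h = "int K - 1 - d"
  define FS where "FS S = {\<pi>\<in>perms_of (I n). \<forall>s\<in>S. \<pi> s = d - s}" for S
  have FSsub: "FS S \<subseteq> perms_of (I n)" for S unfolding FS_def by auto
  have eq: "EvF n {\<pi>\<in>perms_of (I n). \<exists>S\<in>?T. \<forall>s\<in>S. \<pi> s = d - s} = (\<Union>S\<in>?T. EvF n (FS S))"
    unfolding EvF_def FS_def by auto
  have one: "measure M (EvF n (FS S)) \<le> q ^ (K choose 2) * (1 - q) ^ K * Abar q * q ^ Phi ?h S"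
    if S: "S \<in> ?T" for S
  proof -
    have Sm: "S \<subseteq> {- int m..int m}" and cS: "card S = K" using S unfolding Tset_def by auto
    have SA: "S \<subseteq> {- int n..int n}"
    proof
      fix x assume "x \<in> S"
      then have "- int m \<le> x" "x \<le> int m" using Sm by auto
      then show "x \<in> {- int n..int n}" using n by auto
    qed
    have TA: "(\<lambda>s. d - s) ` S \<subseteq> {- int n..int n}"
    proof
      fix y assume "y \<in> (\<lambda>s. d - s) ` S"
      then obtain x where x: "x \<in> S" "y = d - x" by auto
      then have "- int m \<le> x" "x \<le> int m" using Sm by auto
      then show "y \<in> {- int n..int n}" using n x by auto
    qed
    have KN: "K \<le> card (I n)" unfolding I_def using card_mono[OF _ SA] cS by simp
    have "measure M (EvF n (FS S)) = (\<Sum>\<pi>\<in>FS S. q ^ inversions \<pi> (I n)) / Zq q (card (I n))"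
      by (rule EvF_measure[OF FSsub])
    also have "\<dots> \<le> q ^ ((card S choose 2) + Phi (int (card S) - 1 - d) S) * Zq q (card (I n) - card S) / Zq q (card (I n))"
      unfolding FS_def I_def
      by (intro divide_right_mono interval_bound[OF SA TA]) (use q0 q1 Zq_pos[of q] in \<open>auto intro: less_imp_le\<close>)
    also have "\<dots> = q ^ ((K choose 2) + Phi ?h S) * (Zq q (card (I n) - K) / Zq q (card (I n)))"
      using cS by simp
    also have "\<dots> \<le> q ^ ((K choose 2) + Phi ?h S) * ((1 - q) ^ K * Abar q)"
      by (intro mult_left_mono ratio_upper KN) (use q0 in simp)
    finally show ?thesis by (simp add: power_add algebra_simps)
  qed
  have "measure M (EvF n {\<pi>\<in>perms_of (I n). \<exists>S\<in>?T. \<forall>s\<in>S. \<pi> s = d - s}) \<le> (\<Sum>S\<in>?T. measure M (EvF n (FS S)))"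
    unfolding eq by (rule measure_UNION_le[OF finite_Tset]) (rule EvF_sets[OF FSsub])
  also have "\<dots> \<le> (\<Sum>S\<in>?T. q ^ (K choose 2) * (1 - q) ^ K * Abar q * q ^ Phi ?h S)"
    by (rule sum_mono) (rule one)
  also have "\<dots> = q ^ (K choose 2) * (1 - q) ^ K * Abar q * (\<Sum>S\<in>?T. q ^ Phi ?h S)"
    by (simp add: sum_distrib_left)
  also have "\<dots> \<le> q ^ (K choose 2) * (1 - q) ^ K * Abar q * (real (K+1) * q ^ K * (Abar (q^2))^2)"
  proof (rule mult_left_mono)
    have "(\<Sum>S\<in>?T. q ^ Phi ?h S) \<le> Gfun q K (2 * (- int m) + ?h)"
      by (rule T_bound) (use q0 q1 hodd in auto)
    also have "\<dots> \<le> real (K+1) * q ^ K * (Abar (q^2))^2" by (rule Gfun_le) (use q0 q1 in auto)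
    finally show "(\<Sum>S\<in>?T. q ^ Phi ?h S) \<le> real (K+1) * q ^ K * (Abar (q^2))^2" .
    show "0 \<le> q ^ (K choose 2) * (1 - q) ^ K * Abar q"
      using q0 q1 Abar_ge1[of q] by auto
  qed
  finally show ?thesis .
qed

end


context mal
begin

lemma upper_bound:
  fixes d :: int and K :: nat
  assumes f: "\<And>x. f x = d - x" and hodd: "odd (int K - 1 - d)"
  shows "measure M {\<omega> \<in> space M. enat K \<le> C1 (f \<circ> \<Sigma> \<omega>)}
    \<le> q ^ (K choose 2) * (1 - q) ^ K * Abar q * (real (K+1) * q ^ K * (Abar (q^2))^2)"
proof -
  let ?B = "q ^ (K choose 2) * (1 - q) ^ K * Abar q * (real (K+1) * q ^ K * (Abar (q^2))^2)"
  define XM where "XM m = (\<Union>S\<in>Tset (- int m) (int m) K. ES d S)" for m :: nat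
  have finT: "finite S" if "S \<in> Tset L U K" for L U S
  proof -
    have "S \<subseteq> {L..U}" using that unfolding Tset_def by auto
    then show ?thesis by (rule finite_subset) simp
  qed
  have XMs: "XM m \<in> sets M" for m
    unfolding XM_def by (rule sets.finite_UN[OF finite_Tset]) (auto intro: ES_sets finT)
  have Tmono: "Tset (- int m) (int m) K \<subseteq> Tset (- int m') (int m') K" if "m \<le> m'" for m m'
    unfolding Tset_def using that by auto
  have XMi: "incseq XM"
    unfolding incseq_def XM_def using Tmono by blast
  have Xeq: "{\<omega> \<in> space M. enat K \<le> C1 (f \<circ> \<Sigma> \<omega>)} = (\<Union>m. XM m)"
  proof -
    have "(\<Union>S\<in>{S. finite S \<and> card S = K}. ES d S) = (\<Union>m. XM m)"
    proof
      show "(\<Union>S\<in>{S. finite S \<and> card S = K}. ES d S) \<subseteq> (\<Union>m. XM m)"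
      proof
        fix \<omega> assume "\<omega> \<in> (\<Union>S\<in>{S. finite S \<and> card S = K}. ES d S)"
        then obtain S where S: "finite S" "card S = K" "\<omega> \<in> ES d S" by auto
        define m where "m = Max (insert 0 (nat ` abs ` S))"
        have "S \<subseteq> {- int m..int m}"
        proof
          fix x assume x: "x \<in> S"
          have "nat \<bar>x\<bar> \<le> m" unfolding m_def using S(1) x by (intro Max_ge) auto
          then show "x \<in> {- int m..int m}" by auto
        qed
        then have "S \<in> Tset (- int m) (int m) K" unfolding Tset_def using S by auto
        then show "\<omega> \<in> (\<Union>m. XM m)" unfolding XM_def using S by auto
      qed
      show "(\<Union>m. XM m) \<subseteq> (\<Union>S\<in>{S. finite S \<and> card S = K}. ES d S)"
        unfolding XM_def using finT unfolding Tset_def by blast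
    qed
    then show ?thesis using event_eq[OF f] by simp
  qed
  have bound_XM: "measure M (XM m) \<le> ?B" for m
  proof -
    define Y where "Y n = EvF n {\<pi>\<in>perms_of (I n). \<exists>S\<in>Tset (- int m) (int m) K. \<forall>s\<in>S. \<pi> s = d - s}" for n
    have Ys: "Y n \<in> sets M" for n unfolding Y_def by (rule EvF_sets) auto
    define V where "V N = (\<Inter>n\<in>{N..}. Y n)" for N
    have Vs: "V N \<in> sets M" for N unfolding V_def by (rule sets.countable_INT') (use Ys in auto)
    have Vi: "incseq V" unfolding incseq_def V_def by auto
    have UVs: "(\<Union>N. V N) \<in> sets M" using Vs by auto
    define N1 where "N1 = nat (int m + \<bar>d\<bar>)"
    have YB: "measure M (Y n) \<le> ?B" if "N1 \<le> n" for n
      unfolding Y_def by (rule Y_bound[OF hodd]) (use that in \<open>auto simp: N1_def\<close>)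
    have VB: "measure M (V N) \<le> ?B" for N
    proof -
      have "measure M (V N) \<le> measure M (Y (max N N1))"
        by (rule finite_measure_mono[OF _ Ys]) (auto simp: V_def)
      also have "\<dots> \<le> ?B" by (rule YB) simp
      finally show ?thesis .
    qed
    have lim: "(\<lambda>N. measure M (V N)) \<longlonglongrightarrow> measure M (\<Union>N. V N)"
      by (rule finite_Lim_measure_incseq) (use Vs Vi in auto)
    have UB: "measure M (\<Union>N. V N) \<le> ?B" using LIMSEQ_le_const2[OF lim] VB by auto
    have AE: "AE \<omega>\<in>XM m in M. \<omega> \<in> (\<Union>N. V N)"
      using AE_lim AE_perm
    proof (eventually_elim, intro impI)
      fix \<omega> assume lim: "\<forall>i. \<exists>N. \<forall>n\<ge>N. pattern (\<Sigma> \<omega>) (I n) i = \<Sigma> \<omega> i"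
        and perm: "\<forall>n. pattern (\<Sigma> \<omega>) (I n) \<in> perms_of (I n)" and X: "\<omega> \<in> XM m"
      obtain S where S: "S \<in> Tset (- int m) (int m) K" and E: "\<omega> \<in> ES d S" using X unfolding XM_def by auto
      have \<omega>: "\<omega> \<in> space M" and E': "\<forall>s\<in>S. \<Sigma> \<omega> s = d - s" using E unfolding ES_def by auto
      obtain Nf where Nf: "\<And>i n. Nf i \<le> n \<Longrightarrow> pattern (\<Sigma> \<omega>) (I n) i = \<Sigma> \<omega> i"
        using lim by metis
      define N where "N = Max (insert 0 (Nf ` S))"
      have NN: "Nf i \<le> N" if "i \<in> S" for i unfolding N_def using that finT[OF S] by (intro Max_ge) auto
      have "\<omega> \<in> Y n" if n: "N \<le> n" for n
      proof -
        have "\<forall>s\<in>S. pattern (\<Sigma> \<omega>) (I n) s = d - s"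
        proof
          fix s assume s: "s \<in> S"
          have "Nf s \<le> n" using NN[OF s] n by simp
          then show "pattern (\<Sigma> \<omega>) (I n) s = d - s" using Nf E' s by simp
        qed
        then show ?thesis unfolding Y_def EvF_def ev_def using perm S \<omega> by auto
      qed
      then have "\<omega> \<in> V N" unfolding V_def by auto
      then show "\<omega> \<in> (\<Union>N. V N)" by auto
    qed
    have "measure M (XM m) \<le> measure M (\<Union>N. V N)"
      by (rule finite_measure_mono_AE[OF AE UVs])
    then show ?thesis using UB by simp
  qed
  have lim: "(\<lambda>m. measure M (XM m)) \<longlonglongrightarrow> measure M (\<Union>m. XM m)"
    by (rule finite_Lim_measure_incseq) (use XMs XMi in auto)
  have "measure M (\<Union>m. XM m) \<le> ?B" using LIMSEQ_le_const2[OF lim] bound_XM by auto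
  then show ?thesis using Xeq by simp
qed

end


lemma o_from_upper:
  fixes P g e :: "nat \<Rightarrow> real"
  assumes P: "\<And>k. 0 \<le> P k" "\<And>k. P k \<le> g k * e k" and g: "\<And>k. 0 \<le> g k" and e: "e \<longlonglongrightarrow> 0"
  shows "P \<in> o(g)"
proof (rule landau_o.smallI)
  fix c :: real assume c: "0 < c"
  have "eventually (\<lambda>k. e k < c) sequentially" using e c by (rule order_tendstoD)
  then show "eventually (\<lambda>k. norm (P k) \<le> c * norm (g k)) sequentially"
  proof eventually_elim
    case (elim k)
    have "P k \<le> g k * e k" by (rule P)
    also have "\<dots> \<le> g k * c" using elim g[of k] by (intro mult_left_mono) auto
    finally show ?case using P(1)[of k] g[of k] by (simp add: mult.commute)
  qed
qed

lemma omega_from_lower: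
  fixes P g :: "nat \<Rightarrow> real"
  assumes P: "\<And>k. c * g k \<le> P k" and g: "\<And>k. 0 \<le> g k" and c: "0 < c"
  shows "P \<in> \<Omega>(g)"
proof (rule landau_omega.bigI[OF c])
  show "eventually (\<lambda>k. c * norm (g k) \<le> norm (P k)) sequentially"
  proof (rule always_eventually, intro allI)
    fix k
    have "0 \<le> c * g k" using c g[of k] by simp
    then show "c * norm (g k) \<le> norm (P k)" using P[of k] g[of k] by simp
  qed
qed

lemma lim_nq:
  fixes q :: real
  assumes "0 < q" "q < 1"
  shows "(\<lambda>n. real (n+1) * q ^ n) \<longlonglongrightarrow> 0"
proof -
  have a: "(\<lambda>n. of_nat n * q ^ n) \<longlonglongrightarrow> 0" by (rule powser_times_n_limit_0) (use assms in simp)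
  have b: "(\<lambda>n. q ^ n) \<longlonglongrightarrow> 0" by (rule LIMSEQ_power_zero) (use assms in simp)
  have "(\<lambda>n. of_nat n * q ^ n + q ^ n) \<longlonglongrightarrow> 0 + 0" by (rule tendsto_add[OF a b])
  then show ?thesis by (simp add: algebra_simps)
qed

lemma lim_e:
  fixes q A B :: real and r :: "nat \<Rightarrow> nat"
  assumes "0 < q" "q < 1" and r: "strict_mono r"
  shows "(\<lambda>k. A * (real (r k + 1) * q ^ (r k) * B)) \<longlonglongrightarrow> 0"
proof -
  have "((\<lambda>n. real (n+1) * q ^ n) \<circ> r) \<longlonglongrightarrow> 0" by (rule LIMSEQ_subseq_LIMSEQ[OF lim_nq[OF assms(1,2)] r])
  then have "(\<lambda>k. real (r k + 1) * q ^ (r k)) \<longlonglongrightarrow> 0" by (simp add: o_def)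
  then have "(\<lambda>k. A * (real (r k + 1) * q ^ (r k) * B)) \<longlonglongrightarrow> A * (0 * B)"
    by (intro tendsto_intros)
  then show ?thesis by simp
qed

theorem proposition9p1:
  fixes M :: "'a measure" and \<Sigma> :: "'a \<Rightarrow> int \<Rightarrow> int" and q :: real
  assumes "prob_space M" and "0 < q" and "q < 1" and "mallows_Z M q \<Sigma>"
  shows "(\<lambda>k::nat. measure M {\<omega> \<in> space M. enat (2*k) \<le> C1 (rho_map \<circ> \<Sigma> \<omega>)})
           \<in> \<Omega>(\<lambda>k. q ^ ((2*k) choose 2) * (1 - q) ^ (2*k)) \<and>
         (\<lambda>k::nat. measure M {\<omega> \<in> space M. enat (2*k) \<le> C1 (r_map \<circ> \<Sigma> \<omega>)})
           \<in> o(\<lambda>k. q ^ ((2*k) choose 2) * (1 - q) ^ (2*k)) \<and>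
         (\<lambda>k::nat. measure M {\<omega> \<in> space M. enat (2*k+1) \<le> C1 (r_map \<circ> \<Sigma> \<omega>)})
           \<in> \<Omega>(\<lambda>k. q ^ ((2*k+1) choose 2) * (1 - q) ^ (2*k+1)) \<and>
         (\<lambda>k::nat. measure M {\<omega> \<in> space M. enat (2*k+1) \<le> C1 (rho_map \<circ> \<Sigma> \<omega>)})
           \<in> o(\<lambda>k. q ^ ((2*k+1) choose 2) * (1 - q) ^ (2*k+1))"


proof -
  interpret mal M \<Sigma> q using assms by (simp add: mal_def mal_axioms_def)
  have qq: "0 \<le> q" "q < 1" using assms by auto
  have Ab: "0 < Abar q" using Abar_ge1[OF qq] by simp
  have rho: "\<And>x. rho_map x = 1 - x" by (simp add: rho_map_def)
  have r: "\<And>x. r_map x = 0 - x" by (simp add: r_map_def)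
  have sm1: "strict_mono (\<lambda>k::nat. 2 * k)" by (rule strict_monoI) simp
  have sm2: "strict_mono (\<lambda>k::nat. 2 * k + 1)" by (rule strict_monoI) simp
  have gnn: "\<And>K. 0 \<le> q ^ (K choose 2) * (1 - q) ^ K" using qq by simp
  have c: "0 < 1 / (Abar q)^2" using Ab by simp
  show ?thesis
  proof (intro conjI)
    show "(\<lambda>k::nat. measure M {\<omega> \<in> space M. enat (2*k) \<le> C1 (rho_map \<circ> \<Sigma> \<omega>)})
           \<in> \<Omega>(\<lambda>k. q ^ ((2*k) choose 2) * (1 - q) ^ (2*k))"
    proof (rule omega_from_lower[OF _ gnn c])
      fix k :: nat
      have "odd (int (2*k) - 1)" by simp
      then show "1 / (Abar q)^2 * (q ^ ((2*k) choose 2) * (1 - q) ^ (2*k)) \<le> measure M {\<omega> \<in> space M. enat (2*k) \<le> C1 (rho_map \<circ> \<Sigma> \<omega>)}"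
        using lower_bound[OF rho, of "2*k"] by simp
    qed
    show "(\<lambda>k::nat. measure M {\<omega> \<in> space M. enat (2*k+1) \<le> C1 (r_map \<circ> \<Sigma> \<omega>)})
           \<in> \<Omega>(\<lambda>k. q ^ ((2*k+1) choose 2) * (1 - q) ^ (2*k+1))"
    proof (rule omega_from_lower[OF _ gnn c])
      fix k :: nat
      have "odd (int (2*k+1) - 0)" by simp
      then show "1 / (Abar q)^2 * (q ^ ((2*k+1) choose 2) * (1 - q) ^ (2*k+1)) \<le> measure M {\<omega> \<in> space M. enat (2*k+1) \<le> C1 (r_map \<circ> \<Sigma> \<omega>)}"
        using lower_bound[OF r, of "2*k+1"] by simp
    qed
    show "(\<lambda>k::nat. measure M {\<omega> \<in> space M. enat (2*k) \<le> C1 (r_map \<circ> \<Sigma> \<omega>)})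
           \<in> o(\<lambda>k. q ^ ((2*k) choose 2) * (1 - q) ^ (2*k))"
    proof (rule o_from_upper[OF measure_nonneg _ gnn lim_e[OF assms(2,3) sm1]])
      fix k :: nat
      have "odd (int (2*k) - 1 - 0)" by simp
      then show "measure M {\<omega> \<in> space M. enat (2*k) \<le> C1 (r_map \<circ> \<Sigma> \<omega>)}
        \<le> q ^ ((2*k) choose 2) * (1 - q) ^ (2*k) * (Abar q * (real (2*k + 1) * q ^ (2*k) * (Abar (q^2))^2))"
        using upper_bound[OF r, of "2*k"] by (simp add: mult.assoc)
    qed
    show "(\<lambda>k::nat. measure M {\<omega> \<in> space M. enat (2*k+1) \<le> C1 (rho_map \<circ> \<Sigma> \<omega>)})
           \<in> o(\<lambda>k. q ^ ((2*k+1) choose 2) * (1 - q) ^ (2*k+1))"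
    proof (rule o_from_upper[OF measure_nonneg _ gnn lim_e[OF assms(2,3) sm2]])
      fix k :: nat
      have "odd (int (2*k+1) - 1 - 1)" by simp
      then show "measure M {\<omega> \<in> space M. enat (2*k+1) \<le> C1 (rho_map \<circ> \<Sigma> \<omega>)}
        \<le> q ^ ((2*k+1) choose 2) * (1 - q) ^ (2*k+1) * (Abar q * (real (2*k+1 + 1) * q ^ (2*k+1) * (Abar (q^2))^2))"
        using upper_bound[OF rho, of "2*k+1"] by (simp add: mult.assoc)
    qed
  qed
qed


end
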